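(* For every composition $I=(i_1,\dots,i_r)$, \[ e_{(1+i_1,i_2,\dots,i_r)}(q)=[r]_q\,e_I(q)+\sum_{k=1}^{r-1}q^{k-1}e_{(i_1,\dots,i_{k-1},i_k+i_{k+1},i_{k+2},\dots,i_r)}(q), \qquad e_{(1,i_1,i_2,\dots,i_r)}(q)=e_I(q). \] Conversely, these relations together with the initial condition $e_{(1)}(q)=1$ determine $e_I(q)$ for all compositions $I$.
   Context: For a composition $I$ of $n$, $e_I(q)$ is the coefficient of $L_I(q)$ in $S^{(1^n)}(q)$, defined as follows. Compositions: positive integers with sum $n$; $\mathrm{Des}(I)$ the set of partial sums other than $n$; $I\preceq J$ iff $\mathrm{Des}(I)\supseteq\mathrm{Des}(J)$; $\mathrm{st}(I,J)=\#\{(a,b)\in\mathrm{Des}(I)\times\mathrm{Des}(J):a\ge b\}$. $[m]_q=1+\dots+q^{m-1}$. Over $\mathbb K(q)$ ($\mathrm{char}\,\mathbb K=0$): packed words are words with letter set $\{1,\dots,m\}$; $\mathrm{pack}$ replaces the $t$-th smallest letter by $t$. For a packed word $w$ of length $n$: $\mathrm{WC}(w)$ is the composition of $n$ whose descent set is the set of positions $p<n$ with $w_p$ not occurring in $w_{p+1}\cdots w_n$; $\mathrm{sinv}(w)=\#\{i<j:w_i>w_j,\ w_j\text{ not occurring in }w_{j+1}\cdots w_n\}$. $\mathbf{WQSym}$ has basis $\mathbf M_u$ with $\mathbf M_{u'}\mathbf M_{u''}=\sum\mathbf M_u$ over packed $u=v\cdot w$ with $\mathrm{pack}(v)=u'$,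 $\mathrm{pack}(w)=u''$; $\mathbf M_{u'}\star_q\mathbf M_{u''}=\sum q^{\mathrm{sinv}(u)-\mathrm{sinv}(u')-\mathrm{sinv}(u'')}\mathbf M_u$ (associative). $\mathbf{Sym}$ is the quotient by the span of $\mathbf M_u-\mathbf M_v$ with $\mathrm{WC}(u)=\mathrm{WC}(v)$, $\zeta$ the quotient map, $\Psi_I=\zeta(\mathbf M_u)$ for $\mathrm{WC}(u)=I$. $\tilde S_m=\sum\mathbf M_u$ over nondecreasing packed $u$ of length $m$; $S^{(1^n)}(q)=\zeta(\tilde S_1\star_q\cdots\star_q\tilde S_1)$ ($n$ factors); $L_J(q)=\sum_{I\preceq J}q^{\mathrm{st}(I,J)}\Psi_I$. *)

theory Defs
  imports "HOL-Computational_Algebra.Polynomial" "HOL-Computational_Algebra.Fraction_Field"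
begin

definition composition :: "nat list \<Rightarrow> bool" where
  "composition I \<longleftrightarrow> (\<forall>x\<in>set I. 0 < x)"

definition comps :: "nat \<Rightarrow> nat list set" where
  "comps n = {I. composition I \<and> sum_list I = n}"

definition Des :: "nat list \<Rightarrow> nat set" where
  "Des I = {sum_list (take k I) | k. 0 < k \<and> k < length I}"

definition comp_le :: "nat list \<Rightarrow> nat list \<Rightarrow> bool" where
  "comp_le I J \<longleftrightarrow> Des J \<subseteq> Des I"

definition st :: "nat list \<Rightarrow> nat list \<Rightarrow> nat" where
  "st I J = card {(a, b). a \<in> Des I \<and> b \<in> Des J \<and> b \<le> a}"

definition qint :: "'a::comm_ring_1 \<Rightarrow> nat \<Rightarrow> 'a" where
  "qint q m = (\<Sum>i<m. q ^ i)"

definition packed :: "nat list \<Rightarrow> bool" where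
  "packed w \<longleftrightarrow> (\<exists>m. set w = {1..m})"

definition packed_words :: "nat \<Rightarrow> nat list set" where
  "packed_words n = {u. packed u \<and> length u = n}"

definition pack :: "nat list \<Rightarrow> nat list" where
  "pack w = map (\<lambda>x. card {y \<in> set w. y \<le> x}) w"

definition WDes :: "nat list \<Rightarrow> nat set" where
  "WDes w = {p. 1 \<le> p \<and> p < length w \<and> w ! (p - 1) \<notin> set (drop p w)}"

definition WC :: "nat list \<Rightarrow> nat list" where
  "WC w = (THE I. composition I \<and> sum_list I = length w \<and> Des I = WDes w)"

definition sinv :: "nat list \<Rightarrow> nat" where
  "sinv w = card {(i, j). i < j \<and> j < length w \<and> w ! j < w ! i \<and> w ! j \<notin> set (drop (Suc j) w)}"

text \<open>An element of WQSym is represented by its coefficient function u \<mapsto> coefficient of M_u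
  (nonzero only on packed words).\<close>

definition qprod :: "'a::field \<Rightarrow> (nat list \<Rightarrow> 'a) \<Rightarrow> (nat list \<Rightarrow> 'a) \<Rightarrow> nat list \<Rightarrow> 'a" where
  "qprod q f g u = (if packed u then
     (\<Sum>k\<le>length u. f (pack (take k u)) * g (pack (drop k u)) *
        q powi (int (sinv u) - int (sinv (pack (take k u))) - int (sinv (pack (drop k u)))))
   else 0)"

definition Stilde :: "nat \<Rightarrow> nat list \<Rightarrow> 'a::field" where
  "Stilde m u = (if packed u \<and> length u = m \<and> sorted u then 1 else 0)"

text \<open>n-fold q-product \<open>S~_1 \<star>_q \<dots> \<star>_q S~_1\<close> (n \<ge> 1 factors; left-associated, the product
  being associative). For n = 0 we take the unit M_[].\<close>
fun S1pow :: "'a::field \<Rightarrow> nat \<Rightarrow> nat list \<Rightarrow> 'a" where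
  "S1pow q 0 = (\<lambda>u. if u = [] then 1 else 0)"
| "S1pow q (Suc 0) = Stilde 1"
| "S1pow q (Suc (Suc n)) = qprod q (S1pow q (Suc n)) (Stilde 1)"

text \<open>An element of Sym (homogeneous of degree n) is represented by its coefficient function
  I \<mapsto> coefficient of Psi_I. zeta sends M_u to Psi_(WC u).\<close>
definition zeta :: "(nat list \<Rightarrow> 'a::field) \<Rightarrow> nat list \<Rightarrow> 'a" where
  "zeta f I = (\<Sum>u\<in>{u \<in> packed_words (sum_list I). WC u = I}. f u)"

definition S1n :: "'a::field \<Rightarrow> nat \<Rightarrow> nat list \<Rightarrow> 'a" where
  "S1n q n = zeta (S1pow q n)"

text \<open>Coefficient of Psi_I in L_J(q) (for I, J compositions of the same n).\<close>
definition Lq :: "'a::field \<Rightarrow> nat list \<Rightarrow> nat list \<Rightarrow> 'a" where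
  "Lq q J I = (if comp_le I J then q ^ st I J else 0)"

text \<open>e_I(q): coefficient of L_I(q) in the expansion of S^(1^n)(q) in the basis (L_J)_J, J \<models> n.\<close>
definition ecoef :: "'a::field \<Rightarrow> nat list \<Rightarrow> 'a" where
  "ecoef q I = (let n = sum_list I in
     (THE c. (\<forall>J. J \<notin> comps n \<longrightarrow> c J = 0) \<and>
             (\<forall>K\<in>comps n. S1n q n K = (\<Sum>J\<in>comps n. c J * Lq q J K))) I)"

definition qX :: "'k::field_char_0 poly fract" where
  "qX = Fract [:0, 1:] 1"

abbreviation e :: "nat list \<Rightarrow> 'k::field_char_0 poly fract" where
  "e I \<equiv> ecoef qX I"

definition mergeAt :: "nat list \<Rightarrow> nat \<Rightarrow> nat list" where
  "mergeAt I k = take (k - 1) I @ [I ! (k - 1) + I ! k] @ drop (k + 1) I"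

end

theory Submission
  imports Defs
begin


lemma composition_Cons[simp]: "composition (a # K) \<longleftrightarrow> 0 < a \<and> composition K"
  by (auto simp: composition_def)

lemma composition_Nil[simp]: "composition []"
  by (auto simp: composition_def)

lemma composition_sum_pos: "composition xs \<Longrightarrow> xs \<noteq> [] \<Longrightarrow> 0 < sum_list xs"
  by (cases xs) auto

lemma Des_alt: "Des I = (\<lambda>k. sum_list (take k I)) ` {0<..<length I}"
  by (auto simp: Des_def)

lemma Des_Nil[simp]: "Des [] = {}"
  by (simp add: Des_alt)

lemma Des_Cons: "Des (a # K) = (if K = [] then {} else insert a ((+) a ` Des K))"
proof (cases "K = []")
  case True then show ?thesis by (simp add: Des_alt greaterThanLessThan_def lessThan_def)
next
  case False
  have "{0<..<length (a # K)} = insert 1 (Suc ` {0<..<length K})"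
  proof (rule set_eqI)
    fix x :: nat
    show "x \<in> {0<..<length (a # K)} \<longleftrightarrow> x \<in> insert 1 (Suc ` {0<..<length K})"
      using False by (cases x) (auto simp: image_iff)
  qed
  then have "Des (a # K) = insert a ((\<lambda>k. sum_list (take k (a # K))) ` Suc ` {0<..<length K})"
    by (simp add: Des_alt)
  also have "\<dots> = insert a ((+) a ` Des K)"
    by (simp add: Des_alt image_image)
  finally show ?thesis using False by simp
qed

lemma Des_single[simp]: "Des [a] = {}"
  by (simp add: Des_Cons)

lemma Des_Cons_Cons: "Des (a # b # K) = insert a ((+) a ` Des (b # K))"
  by (simp add: Des_Cons)

lemma Des_bounds: "composition I \<Longrightarrow> x \<in> Des I \<Longrightarrow> 0 < x \<and> x < sum_list I"
proof (induction I arbitrary: x)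
  case Nil then show ?case by simp
next
  case (Cons a K)
  then show ?case
    by (auto simp: Des_Cons split: if_splits dest: composition_sum_pos)
qed

lemma Des_sub: "composition I \<Longrightarrow> Des I \<subseteq> {1..<sum_list I}"
  using Des_bounds by fastforce

lemma finite_Des[simp]: "finite (Des I)"
  by (simp add: Des_alt)

lemma Des_inj: "composition I \<Longrightarrow> composition J \<Longrightarrow> sum_list I = sum_list J \<Longrightarrow> Des I = Des J \<Longrightarrow> I = J"
proof (induction I arbitrary: J)
  case Nil
  then show ?case by (cases J) (auto dest: composition_sum_pos)
next
  case (Cons a K)
  then obtain b L where J: "J = b # L"
    by (cases J) auto
  have minI: "K \<noteq> [] \<Longrightarrow> a = Min (Des (a # K))"
    by (auto simp: Des_Cons intro!: Min_eqI[symmetric] dest: Des_bounds[OF _ ] simp: Cons.prems)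
  show ?case
  proof (cases "K = []")
    case True
    then have "Des J = {}" using Cons by simp
    then have "L = []" using J by (auto simp: Des_Cons split: if_splits)
    then show ?thesis using Cons True J by simp
  next
    case False
    then have L: "L \<noteq> []" using Cons J by (auto simp: Des_Cons split: if_splits)
    have minJ: "b = Min (Des (b # L))"
      using L Cons.prems J by (auto simp: Des_Cons intro!: Min_eqI[symmetric] dest: Des_bounds[OF _ ])
    have ab: "a = b" using minI[OF False] minJ Cons.prems J by simp
    have nK: "a \<notin> (+) a ` Des K" "a \<notin> (+) a ` Des L"
      using Cons.prems J by (auto dest: Des_bounds)
    have "insert a ((+) a ` Des K) = insert a ((+) a ` Des L)"
      using Cons.prems J False L ab by (simp add: Des_Cons)
    then have "(+) a ` Des K = (+) a ` Des L"
      by (simp add: insert_ident[OF nK])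
    then have "Des K = Des L"
      by (simp add: inj_image_eq_iff)
    then have "K = L" using Cons J ab by auto
    then show ?thesis using J ab by simp
  qed
qed

lemma card_Des: "composition I \<Longrightarrow> card (Des I) = length I - 1"
proof (induction I)
  case Nil then show ?case by simp
next
  case (Cons a K)
  show ?case
  proof (cases "K = []")
    case True then show ?thesis by simp
  next
    case False
    have "a \<notin> (+) a ` Des K" using Cons by (auto dest: Des_bounds)
    then have "card (Des (a # K)) = Suc (card (Des K))"
      using False by (simp add: Des_Cons card_image)
    then show ?thesis using Cons False by simp
  qed
qed

lemma Des_surj: "1 \<le> n \<Longrightarrow> D \<subseteq> {1..<n} \<Longrightarrow> \<exists>K. composition K \<and> sum_list K = n \<and> Des K = D"
proof (induction n arbitrary: D rule: nat_induct_at_least)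
  case base
  then have "D = {}" by auto
  then show ?case by (intro exI[of _ "[1]"]) auto
next
  case (Suc n)
  show ?case
  proof (cases "1 \<in> D")
    case True
    define D' where "D' = (\<lambda>x. x - 1) ` (D - {1})"
    have "D' \<subseteq> {1..<n}"
    proof
      fix y assume "y \<in> D'"
      then obtain x where x: "x \<in> D" "x \<noteq> 1" "y = x - 1" by (auto simp: D'_def)
      have "x \<in> {1..<Suc n}" using Suc.prems x(1) by blast
      then show "y \<in> {1..<n}" using x by (cases x) auto
    qed
    then obtain K where K: "composition K" "sum_list K = n" "Des K = D'" using Suc.IH by blast
    have Kne: "K \<noteq> []" using K Suc.hyps by auto
    have "Des (1 # K) = insert 1 (Suc ` D')" using Kne K by (simp add: Des_Cons)
    also have "Suc ` D' = D - {1}"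
    proof -
      have eq: "\<And>x. x \<in> D \<Longrightarrow> Suc (x - 1) = x" using Suc.prems by force
      have "Suc ` D' = (\<lambda>x. Suc (x - 1)) ` (D - {1})" by (simp add: D'_def image_image)
      also have "\<dots> = id ` (D - {1})" by (rule image_cong) (use eq in auto)
      finally show ?thesis by simp
    qed
    finally show ?thesis using K True by (intro exI[of _ "1 # K"]) auto
  next
    case False
    define D' where "D' = (\<lambda>x. x - 1) ` D"
    have "D' \<subseteq> {1..<n}"
    proof
      fix y assume "y \<in> D'"
      then obtain x where x: "x \<in> D" "y = x - 1" by (auto simp: D'_def)
      have "x \<in> {1..<Suc n}" "x \<noteq> 1" using Suc.prems x(1) False by blast+
      then show "y \<in> {1..<n}" using x by (cases x) auto
    qed
    then obtain K where K: "composition K" "sum_list K = n" "Des K = D'" using Suc.IH by blast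
    have Kne: "K \<noteq> []" using K Suc.hyps by auto
    then obtain b L where KL: "K = b # L" by (cases K) auto
    have "Des (Suc b # L) = Suc ` D'"
      using K(3) by (auto simp: KL Des_Cons image_image)
    also have "Suc ` D' = D"
    proof -
      have eq: "\<And>x. x \<in> D \<Longrightarrow> Suc (x - 1) = x" using Suc.prems by force
      have "Suc ` D' = (\<lambda>x. Suc (x - 1)) ` D" by (simp add: D'_def image_image)
      also have "\<dots> = id ` D" by (rule image_cong) (use eq in auto)
      finally show ?thesis by simp
    qed
    finally show ?thesis using K KL by (intro exI[of _ "Suc b # L"]) auto
  qed
qed

lemma ps_strict: "composition J \<Longrightarrow> i < j \<Longrightarrow> j \<le> length J \<Longrightarrow> sum_list (take i J) < sum_list (take j J)"
proof -
  assume a: "composition J" "i < j" "j \<le> length J"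
  have "take j J = take i J @ take (j - i) (drop i J)"
    using take_add[of i "j - i" J] a by simp
  moreover have "0 < sum_list (take (j - i) (drop i J))"
    using a by (intro composition_sum_pos) (auto simp: composition_def dest: in_set_takeD in_set_dropD)
  ultimately show ?thesis by simp
qed

lemma ps_inj: "composition J \<Longrightarrow> inj_on (\<lambda>k. sum_list (take k J)) {..length J}"
  unfolding inj_on_def
  by (metis atMost_iff linorder_neqE_nat nat_less_le ps_strict)

lemma ps_bij: "composition J \<Longrightarrow> bij_betw (\<lambda>k. sum_list (take k J)) {1..<length J} (Des J)"
  unfolding bij_betw_def
  by (auto simp: Des_alt intro: inj_on_subset[OF ps_inj])

lemma ps_rank: "composition J \<Longrightarrow> 1 \<le> k \<Longrightarrow> k < length J \<Longrightarrow>
   card {b \<in> Des J. b < sum_list (take k J)} = k - 1"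
proof -
  assume a: "composition J" "1 \<le> k" "k < length J"
  have "{b \<in> Des J. b < sum_list (take k J)} = (\<lambda>k. sum_list (take k J)) ` {0<..<k}"
  proof
    show "{b \<in> Des J. b < sum_list (take k J)} \<subseteq> (\<lambda>k. sum_list (take k J)) ` {0<..<k}"
    proof
      fix b assume "b \<in> {b \<in> Des J. b < sum_list (take k J)}"
      then obtain i where i: "0 < i" "i < length J" "b = sum_list (take i J)" "b < sum_list (take k J)"
        by (auto simp: Des_alt)
      have "i < k"
      proof (rule ccontr)
        assume "\<not> i < k"
        then have "k < i \<or> k = i" by auto
        then show False
          using ps_strict[OF a(1), of k i] i by auto
      qed
      then show "b \<in> (\<lambda>k. sum_list (take k J)) ` {0<..<k}" using i by auto
    qed
  next
    show "(\<lambda>k. sum_list (take k J)) ` {0<..<k} \<subseteq> {b \<in> Des J. b < sum_list (take k J)}"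
    proof
      fix b assume "b \<in> (\<lambda>k. sum_list (take k J)) ` {0<..<k}"
      then obtain i where i: "0 < i" "i < k" "b = sum_list (take i J)" by auto
      have "b \<in> Des J" using i a by (auto simp: Des_alt)
      moreover have "b < sum_list (take k J)" using i a ps_strict[OF a(1), of i k] by auto
      ultimately show "b \<in> {b \<in> Des J. b < sum_list (take k J)}" by simp
    qed
  qed
  moreover have "inj_on (\<lambda>k. sum_list (take k J)) {0<..<k}"
    using a by (intro inj_on_subset[OF ps_inj]) auto
  ultimately show ?thesis by (simp add: card_image)
qed

lemma mergeAt_Cons: "1 \<le> k \<Longrightarrow> mergeAt (a # J) (Suc k) = a # mergeAt J k"
  by (cases k) (simp_all add: mergeAt_def)

lemma mergeAt_1: "mergeAt (a # b # T) 1 = (a + b) # T"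
  by (simp add: mergeAt_def)

lemma ps_pos: "composition J \<Longrightarrow> 0 < k \<Longrightarrow> k \<le> length J \<Longrightarrow> 0 < sum_list (take k J)"
  using ps_strict[of J 0 k] by simp

lemma mergeAt_props:
  "composition J \<Longrightarrow> 1 \<le> k \<Longrightarrow> k < length J \<Longrightarrow>
    composition (mergeAt J k) \<and> sum_list (mergeAt J k) = sum_list J \<and>
    Des (mergeAt J k) = Des J - {sum_list (take k J)} \<and> mergeAt J k \<noteq> []"
proof (induction J arbitrary: k)
  case Nil then show ?case by simp
next
  case (Cons a J)
  show ?case
  proof (cases "k = 1")
    case True
    then obtain b T where J: "J = b # T" using Cons.prems by (cases J) auto
    have na: "a \<notin> (+) a ` Des (b # T)" using Cons.prems J Des_bounds[of "b # T"] by force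
    have "Des (a # b # T) - {a} = (+) a ` Des (b # T)"
      using na by (simp add: Des_Cons_Cons)
    also have "\<dots> = Des ((a + b) # T)"
      by (simp add: Des_Cons image_image add.assoc)
    finally show ?thesis using True J Cons.prems by (simp add: mergeAt_def)
  next
    case False
    then obtain k' where k: "k = Suc k'" "1 \<le> k'" using Cons.prems by (cases k) auto
    have k': "k' < length J" using Cons.prems k by simp
    then have Jne: "J \<noteq> []" by auto
    have IH: "composition (mergeAt J k') \<and> sum_list (mergeAt J k') = sum_list J \<and>
       Des (mergeAt J k') = Des J - {sum_list (take k' J)} \<and> mergeAt J k' \<noteq> []"
      using Cons k k' by auto
    have pos: "0 < sum_list (take k' J)" using ps_pos[of J k'] Cons.prems k k' by simp
    have "Des (a # mergeAt J k') = insert a ((+) a ` (Des J - {sum_list (take k' J)}))"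
      using IH by (simp add: Des_Cons)
    also have "\<dots> = insert a ((+) a ` Des J) - {a + sum_list (take k' J)}"
      using pos by (auto simp: image_set_diff)
    also have "\<dots> = Des (a # J) - {sum_list (take k (a # J))}"
      using Jne k by (simp add: Des_Cons)
    finally show ?thesis using IH k Cons.prems by (simp add: mergeAt_Cons)
  qed
qed




definition rk :: "nat list \<Rightarrow> nat \<Rightarrow> nat" where
  "rk w x = card {y \<in> set w. y \<le> x}"

lemma pack_rk: "pack w = map (rk w) w"
  by (simp add: pack_def rk_def)

lemma length_pack[simp]: "length (pack w) = length w"
  by (simp add: pack_def)

lemma rk_strict: "strict_mono_on (set w) (rk w)"
proof (rule strict_mono_onI)
  fix r s assume rs: "r \<in> set w" "s \<in> set w" "r < s"
  have "s \<in> {y \<in> set w. y \<le> s}" "s \<notin> {y \<in> set w. y \<le> r}" using rs by auto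
  moreover have "{y \<in> set w. y \<le> r} \<subseteq> {y \<in> set w. y \<le> s}" using rs by auto
  ultimately have "{y \<in> set w. y \<le> r} \<subset> {y \<in> set w. y \<le> s}"
    by blast
  then show "rk w r < rk w s" unfolding rk_def by (intro psubset_card_mono) auto
qed

lemma set_pack: "set (pack w) = {1..card (set w)}"
proof -
  have sub: "rk w ` set w \<subseteq> {1..card (set w)}"
  proof
    fix z assume "z \<in> rk w ` set w"
    then obtain x where x: "x \<in> set w" "z = rk w x" by auto
    have "x \<in> {y \<in> set w. y \<le> x}" using x by auto
    then have "0 < card {y \<in> set w. y \<le> x}" by (subst card_gt_0_iff) auto
    then have "1 \<le> rk w x" unfolding rk_def by simp
    moreover have "rk w x \<le> card (set w)" unfolding rk_def by (intro card_mono) auto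
    ultimately show "z \<in> {1..card (set w)}" using x by auto
  qed
  have "card (rk w ` set w) = card (set w)"
    using strict_mono_on_imp_inj_on[OF rk_strict] by (simp add: card_image)
  then have "rk w ` set w = {1..card (set w)}"
    using sub by (intro card_subset_eq) auto
  then show ?thesis by (simp add: pack_rk)
qed

lemma packed_pack: "packed (pack w)"
  unfolding packed_def using set_pack by blast

section \<open>Invariance under order-preserving maps\<close>

lemma set_drop_sub: "set (drop p v) \<subseteq> set v"
  by (rule set_drop_subset)

lemma mono_map_notin:
  fixes v :: "nat list" and h :: "nat \<Rightarrow> nat"
  assumes h: "strict_mono_on (set v) h" and j: "j < length v"
  shows "h (v ! j) \<notin> set (drop p (map h v)) \<longleftrightarrow> v ! j \<notin> set (drop p v)"
proof -
  have "set (drop p (map h v)) = h ` set (drop p v)" by (simp add: drop_map)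
  moreover have "v ! j \<in> set v" using j by simp
  moreover have "inj_on h (set v)" using strict_mono_on_imp_inj_on[OF h] .
  ultimately show ?thesis
    using set_drop_subset[of p v] by (auto simp: inj_on_image_mem_iff)
qed

lemma sinv_map_mono:
  fixes v :: "nat list" and h :: "nat \<Rightarrow> nat"
  assumes h: "strict_mono_on (set v) h"
  shows "sinv (map h v) = sinv v"
proof -
  have "{(i, j). i < j \<and> j < length (map h v) \<and> map h v ! j < map h v ! i \<and>
          map h v ! j \<notin> set (drop (Suc j) (map h v))}
      = {(i, j). i < j \<and> j < length v \<and> v ! j < v ! i \<and> v ! j \<notin> set (drop (Suc j) v)}"
    using mono_map_notin[OF h] strict_mono_on_less[OF h] by auto
  then show ?thesis by (simp add: sinv_def)
qed

lemma WDes_map_mono: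
  fixes v :: "nat list" and h :: "nat \<Rightarrow> nat"
  assumes h: "strict_mono_on (set v) h"
  shows "WDes (map h v) = WDes v"
proof -
  have "\<And>p. 1 \<le> p \<Longrightarrow> p < length v \<Longrightarrow>
     (map h v ! (p - 1) \<notin> set (drop p (map h v))) = (v ! (p - 1) \<notin> set (drop p v))"
    using mono_map_notin[OF h] by auto
  then show ?thesis by (auto simp: WDes_def)
qed

lemma sinv_pack: "sinv (pack w) = sinv w"
  by (simp add: pack_rk sinv_map_mono[OF rk_strict])

lemma WDes_pack: "WDes (pack w) = WDes w"
  by (simp add: pack_rk WDes_map_mono[OF rk_strict])

section \<open>Last occurrences\<close>

definition LO :: "nat list \<Rightarrow> nat set" where
  "LO v = {j. j < length v \<and> v ! j \<notin> set (drop (Suc j) v)}"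

lemma LO_bij: "bij_betw ((!) v) (LO v) (set (v :: nat list))"
proof -
  have inj: "inj_on ((!) v) (LO v)"
  proof (rule inj_onI)
    fix i j assume ij: "i \<in> LO v" "j \<in> LO v" "v ! i = v ! j"
    show "i = j"
    proof (rule ccontr)
      assume "i \<noteq> j"
      then consider "i < j" | "j < i" by linarith
      then show False
      proof cases
        case 1
        then have "v ! j \<in> set (drop (Suc i) v)"
          using ij by (auto simp: LO_def in_set_conv_nth intro!: exI[of _ "j - Suc i"])
        then show False using ij by (auto simp: LO_def)
      next
        case 2
        then have "v ! i \<in> set (drop (Suc j) v)"
          using ij by (auto simp: LO_def in_set_conv_nth intro!: exI[of _ "i - Suc j"])
        then show False using ij by (auto simp: LO_def)
      qed
    qed
  qed
  have surj: "set v \<subseteq> (!) v ` LO v"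
  proof
    fix y assume y: "y \<in> set v"
    define j where "j = Max {j. j < length v \<and> v ! j = y}"
    have ne: "{j. j < length v \<and> v ! j = y} \<noteq> {}" using y by (auto simp: in_set_conv_nth)
    have fin: "finite {j. j < length v \<and> v ! j = y}" by simp
    have jin: "j < length v" "v ! j = y" using Max_in[OF fin ne] by (auto simp: j_def)
    have "y \<notin> set (drop (Suc j) v)"
    proof
      assume "y \<in> set (drop (Suc j) v)"
      then obtain k where k: "k < length v - Suc j" "v ! (Suc j + k) = y"
        by (auto simp: in_set_conv_nth)
      then have "Suc j + k \<le> j" unfolding j_def by (intro Max_ge[OF fin]) auto
      then show False by simp
    qed
    then show "y \<in> (!) v ` LO v" using jin by (auto simp: LO_def image_iff intro!: bexI[of _ j])
  qed
  show ?thesis using inj surj unfolding bij_betw_def by (auto simp: LO_def)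
qed

lemma card_LO_less:
  fixes v :: "nat list"
  shows "card {j. j < length v \<and> v ! j < x \<and> v ! j \<notin> set (drop (Suc j) v)} = card {y \<in> set v. y < x}"
proof -
  have "bij_betw ((!) v) {j \<in> LO v. v ! j < x} {y \<in> set v. y < x}"
    using LO_bij[of v] unfolding bij_betw_def by (auto simp: inj_on_def image_iff)
  then have "card {j \<in> LO v. v ! j < x} = card {y \<in> set v. y < x}" by (rule bij_betw_same_card)
  moreover have "{j \<in> LO v. v ! j < x} = {j. j < length v \<and> v ! j < x \<and> v ! j \<notin> set (drop (Suc j) v)}"
    by (auto simp: LO_def)
  ultimately show ?thesis by simp
qed

lemma WDes_LO: "(v::nat list) \<noteq> [] \<Longrightarrow> WDes v = Suc ` (LO v - {length v - 1})"
proof (rule set_eqI, rule iffI)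
  fix p assume "p \<in> WDes v"
  then have p: "1 \<le> p" "p < length v" "v ! (p - 1) \<notin> set (drop p v)" by (auto simp: WDes_def)
  then show "p \<in> Suc ` (LO v - {length v - 1})"
    by (auto simp: LO_def image_iff intro!: bexI[of _ "p - 1"])
next
  fix p assume "p \<in> Suc ` (LO v - {length v - 1})"
  then obtain j where "p = Suc j" "j < length v" "j \<noteq> length v - 1" "v ! j \<notin> set (drop (Suc j) v)"
    by (auto simp: LO_def)
  then show "p \<in> WDes v" by (auto simp: WDes_def)
qed

lemma card_set_WDes: "(v::nat list) \<noteq> [] \<Longrightarrow> card (set v) = card (WDes v) + 1"
proof -
  assume v: "v \<noteq> []"
  have last: "length v - 1 \<in> LO v" using v by (simp add: LO_def)
  have fin: "finite (LO v)" by (simp add: LO_def)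
  have "card (set v) = card (LO v)" using bij_betw_same_card[OF LO_bij] by simp
  also have "\<dots> = card (LO v - {length v - 1}) + 1"
    using card_Suc_Diff1[OF fin last] by simp
  also have "card (LO v - {length v - 1}) = card (WDes v)"
    using v by (simp add: WDes_LO card_image)
  finally show ?thesis .
qed

section \<open>First letter decomposition\<close>

definition SI :: "nat list \<Rightarrow> (nat \<times> nat) set" where
  "SI w = {(i, j). i < j \<and> j < length w \<and> w ! j < w ! i \<and> w ! j \<notin> set (drop (Suc j) w)}"

lemma finite_SI: "finite (SI w)"
proof -
  have "SI w \<subseteq> {..<length w} \<times> {..<length w}" by (auto simp: SI_def)
  then show ?thesis by (rule finite_subset) auto
qed

lemma sinv_SI: "sinv w = card (SI w)"
  by (simp add: sinv_def SI_def)

lemma sinv_Cons: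
  "sinv (x # v) = sinv v + card {j. j < length v \<and> v ! j < x \<and> v ! j \<notin> set (drop (Suc j) v)}"
proof -
  define A where "A = {j. j < length v \<and> v ! j < x \<and> v ! j \<notin> set (drop (Suc j) v)}"
  have eq: "SI (x # v) = (\<lambda>j. (0, Suc j)) ` A \<union> (\<lambda>(i, j). (Suc i, Suc j)) ` SI v"
  proof (rule set_eqI)
    fix p :: "nat \<times> nat"
    obtain i j where p: "p = (i, j)" by (cases p)
    show "p \<in> SI (x # v) \<longleftrightarrow> p \<in> (\<lambda>j. (0, Suc j)) ` A \<union> (\<lambda>(i, j). (Suc i, Suc j)) ` SI v"
      unfolding p
      by (cases i; cases j) (auto simp: SI_def A_def image_iff)
  qed
  have fA: "finite A" by (simp add: A_def)
  have "card (SI (x # v)) = card ((\<lambda>j. (0::nat, Suc j)) ` A) + card ((\<lambda>(i, j). (Suc i, Suc j)) ` SI v)"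
    unfolding eq using fA finite_SI by (intro card_Un_disjoint) auto
  also have "card ((\<lambda>j. (0::nat, Suc j)) ` A) = card A"
    by (rule card_image) (auto simp: inj_on_def)
  also have "card ((\<lambda>(i, j). (Suc i, Suc j)) ` SI v) = card (SI v)"
    by (rule card_image) (auto simp: inj_on_def)
  finally show ?thesis by (simp add: sinv_SI A_def)
qed

lemma sinv_Cons':
  "sinv (x # v) = sinv v + card {y \<in> set v. y < x}"
  by (simp add: sinv_Cons card_LO_less)

lemma WDes_Cons:
  "WDes (x # v) = (if x \<notin> set v \<and> v \<noteq> [] then insert 1 (Suc ` WDes v) else Suc ` WDes v)"
proof (rule set_eqI)
  fix p
  show "p \<in> WDes (x # v) \<longleftrightarrow> p \<in> (if x \<notin> set v \<and> v \<noteq> [] then insert 1 (Suc ` WDes v) else Suc ` WDes v)"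
  proof (cases p)
    case 0 then show ?thesis by (auto simp: WDes_def)
  next
    case (Suc p')
    show ?thesis
    proof (cases p')
      case 0 then show ?thesis using Suc by (auto simp: WDes_def)
    next
      case (Suc p'')
      then show ?thesis using \<open>p = Suc p'\<close> by (auto simp: WDes_def image_iff)
    qed
  qed
qed

lemma zero_notin_WDes: "0 \<notin> WDes v"
  by (simp add: WDes_def)

lemma sinv_single: "sinv [a] = 0"
proof -
  have "SI [a] = {}" by (auto simp: SI_def)
  then show ?thesis by (simp add: sinv_SI)
qed

lemma sinv_Nil: "sinv [] = 0"
proof -
  have "SI [] = {}" by (auto simp: SI_def)
  then show ?thesis by (simp add: sinv_SI)
qed

section \<open>The n-fold product\<close>

lemma packed_Nil: "packed []"
  by (auto simp: packed_def intro: exI[of _ 0])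

lemma pack_single: "pack [a] = [1]"
proof -
  have "{y \<in> set [a]. y \<le> a} = {a}" by auto
  then show ?thesis by (simp add: pack_def)
qed

lemma packed_one: "packed [Suc 0]"
  by (auto simp: packed_def intro: exI[of _ 1])

lemma Stilde1_pack: "Stilde (Suc 0) (pack w) = (if length w = 1 then 1 else 0)"
proof (cases "length w = 1")
  case True
  then obtain a where "w = [a]" by (cases w) auto
  then show ?thesis by (simp add: Stilde_def pack_single packed_one)
next
  case False then show ?thesis by (simp add: Stilde_def)
qed

lemma S1pow_eq:
  fixes q :: "'a::field"
  assumes q: "q \<noteq> 0"
  shows "S1pow q n u = (if packed u \<and> length u = n then q ^ sinv u else 0)"
  using assms
proof (induction q n arbitrary: u rule: S1pow.induct)
  case (1 q)
  then show ?case by (auto simp: packed_Nil sinv_Nil)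
next
  case (2 q)
  show ?case
  proof (cases "length u = 1")
    case True
    then obtain a where "u = [a]" by (cases u) auto
    then show ?thesis by (simp add: Stilde_def sinv_single)
  next
    case False then show ?thesis by (simp add: Stilde_def)
  qed
next
  case (3 q n)
  show ?case
  proof (cases "packed u \<and> u \<noteq> []")
    case False
    then show ?thesis by (auto simp: qprod_def Stilde1_pack)
  next
    case True
    define L where "L = length u"
    have L: "1 \<le> L" using True by (simp add: L_def Suc_le_eq)
    have "S1pow q (Suc (Suc n)) u = (\<Sum>k\<le>L. S1pow q (Suc n) (pack (take k u)) * Stilde (Suc 0) (pack (drop k u)) *
        q powi (int (sinv u) - int (sinv (pack (take k u))) - int (sinv (pack (drop k u)))))"
      using True by (simp add: qprod_def L_def)
    also have "\<dots> = (\<Sum>k\<le>L. (if k = L - 1 then S1pow q (Suc n) (pack (take k u)) *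
        q powi (int (sinv u) - int (sinv (pack (take k u))) - int (sinv (pack (drop k u)))) else 0))"
      using L by (intro sum.cong) (auto simp: Stilde1_pack L_def)
    also have "\<dots> = S1pow q (Suc n) (pack (take (L - 1) u)) *
        q powi (int (sinv u) - int (sinv (pack (take (L - 1) u))) - int (sinv (pack (drop (L - 1) u))))"
      using L by simp
    also have "pack (drop (L - 1) u) = [1]"
    proof -
      have "length (drop (L - 1) u) = 1" using L by (simp add: L_def)
      then obtain a where "drop (L - 1) u = [a]" using length_Suc_conv[of "drop (L - 1) u" 0] by auto
      then show ?thesis by (simp add: pack_single)
    qed
    finally have eq: "S1pow q (Suc (Suc n)) u = S1pow q (Suc n) (pack (take (L - 1) u)) *
        q powi (int (sinv u) - int (sinv (pack (take (L - 1) u))))"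
      by (simp add: sinv_single)
    show ?thesis
    proof (cases "L = Suc (Suc n)")
      case True
      have "S1pow q (Suc (Suc n)) u = q ^ sinv (take (L - 1) u) *
          q powi (int (sinv u) - int (sinv (take (L - 1) u)))"
        using eq 3 True by (simp add: packed_pack sinv_pack L_def)
      also have "\<dots> = q ^ sinv u"
        by (subst power_int_diff) (use "3.prems" in auto)
      finally show ?thesis using True \<open>packed u \<and> u \<noteq> []\<close> by (simp add: L_def)
    next
      case False
      then show ?thesis using eq 3 L by (auto simp: L_def)
    qed
  qed
qed

lemma WDes_sub: "WDes u \<subseteq> {1..<length u}"
  by (auto simp: WDes_def)

lemma WC_ex1: "\<exists>!I. composition I \<and> sum_list I = length u \<and> Des I = WDes u"
proof -
  have "\<exists>I. composition I \<and> sum_list I = length u \<and> Des I = WDes u"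
  proof (cases "u = []")
    case True then show ?thesis by (intro exI[of _ "[]"]) (auto simp: WDes_def)
  next
    case False
    then show ?thesis using Des_surj[of "length u" "WDes u"] WDes_sub[of u] by (simp add: Suc_le_eq)
  qed
  then show ?thesis
  proof (rule ex_ex1I)
    fix I J
    assume "composition I \<and> sum_list I = length u \<and> Des I = WDes u"
      "composition J \<and> sum_list J = length u \<and> Des J = WDes u"
    then show "I = J" using Des_inj[of I J] by simp
  qed
qed

lemma WC_iff: "WC u = K \<longleftrightarrow> composition K \<and> sum_list K = length u \<and> Des K = WDes u"
proof
  assume "WC u = K"
  then show "composition K \<and> sum_list K = length u \<and> Des K = WDes u"
    using theI'[OF WC_ex1[of u]] by (simp add: WC_def)
next
  assume "composition K \<and> sum_list K = length u \<and> Des K = WDes u"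
  then show "WC u = K"
    unfolding WC_def by (rule the1_equality[OF WC_ex1])
qed

lemma finite_packed_words: "finite (packed_words n)"
proof -
  have "packed_words n \<subseteq> {u. set u \<subseteq> {..n} \<and> length u = n}"
  proof
    fix u assume u: "u \<in> packed_words n"
    then have len: "length u = n" by (simp add: packed_words_def)
    from u obtain m where m: "set u = {1..m}" unfolding packed_words_def packed_def by blast
    have "card (set u) \<le> n" using len card_length[of u] by simp
    then have "m \<le> n" using m by simp
    then have "set u \<subseteq> {..n}" using m by auto
    then show "u \<in> {u. set u \<subseteq> {..n} \<and> length u = n}" using len by simp
  qed
  moreover have "finite {u. set u \<subseteq> {..n} \<and> length u = n}"
    by (rule finite_lists_length_eq) simp
  ultimately show ?thesis by (rule finite_subset)
qed

lemma packed_card: "packed u \<Longrightarrow> set u = {1..card (set u)}"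
proof -
  assume "packed u"
  then obtain m where m: "set u = {1..m}" by (auto simp: packed_def)
  then have "card (set u) = m" by simp
  then show ?thesis using m by simp
qed

definition T :: "'a::field \<Rightarrow> nat \<Rightarrow> nat set \<Rightarrow> 'a" where
  "T q n E = (\<Sum>u\<in>{u \<in> packed_words n. WDes u = E}. q ^ sinv u)"

lemma S1n_T:
  fixes q :: "'a::field"
  assumes q: "q \<noteq> 0" and K: "composition K"
  shows "S1n q (sum_list K) K = T q (sum_list K) (Des K)"
proof -
  have "S1n q (sum_list K) K = (\<Sum>u\<in>{u \<in> packed_words (sum_list K). WC u = K}. q ^ sinv u)"
    unfolding S1n_def zeta_def using q by (intro sum.cong refl) (simp add: S1pow_eq packed_words_def)
  also have "{u \<in> packed_words (sum_list K). WC u = K} = {u \<in> packed_words (sum_list K). WDes u = Des K}"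
    using K by (auto simp: WC_iff packed_words_def)
  finally show ?thesis by (simp add: T_def)
qed

lemma qint_shift: "qint q m = (\<Sum>x\<in>{1..m}. q ^ (x - 1))"
proof -
  have "{1..m} = Suc ` {..<m}" by (simp add: image_Suc_lessThan)
  then show ?thesis by (simp add: qint_def sum.reindex)
qed

lemma card_less_interval: "x \<le> m \<Longrightarrow> card {y \<in> {1..m::nat}. y < x} = x - 1"
proof -
  assume "x \<le> m"
  then have "{y \<in> {1..m}. y < x} = {1..<x}" by auto
  then show ?thesis by simp
qed





lemma T_rec1:
  fixes q :: "'a::field"
  assumes n: "1 \<le> n" and E: "0 \<notin> E"
  shows "T q (Suc n) (Suc ` E) = qint q (card E + 1) * T q n E"
proof -
  define B where "B = {v \<in> packed_words n. WDes v = E}"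
  define A where "A = {u \<in> packed_words (Suc n). WDes u = Suc ` E}"
  have bij: "bij_betw (\<lambda>(v, x). x # v) (Sigma B set) A"
  proof -
    have inj: "inj_on (\<lambda>(v, x). x # v) (Sigma B set)" by (auto simp: inj_on_def)
    have sub: "(\<lambda>(v, x). x # v) ` Sigma B set \<subseteq> A"
    proof
      fix u assume "u \<in> (\<lambda>(v, x). x # v) ` Sigma B set"
      then obtain v x where u: "u = x # v" "v \<in> B" "x \<in> set v" by auto
      have su: "set u = set v" using u by auto
      have pu: "packed u" using u(2) su by (simp add: B_def packed_words_def packed_def)
      have lu: "length u = Suc n" using u(1,2) by (simp add: B_def packed_words_def)
      have wu: "WDes u = Suc ` E" using u by (simp add: WDes_Cons B_def)
      show "u \<in> A" using pu lu wu by (simp add: A_def packed_words_def)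
    qed
    have sup: "A \<subseteq> (\<lambda>(v, x). x # v) ` Sigma B set"
    proof
      fix u assume uA: "u \<in> A"
      have "length u = Suc n" using uA by (simp add: A_def packed_words_def)
      then obtain x v where u: "u = x # v" by (cases u) auto
      have len: "length v = n" using uA u by (auto simp: A_def packed_words_def)
      then have vne: "v \<noteq> []" using n by auto
      have W: "WDes u = Suc ` E" using uA by (simp add: A_def)
      have "1 \<notin> Suc ` E" using E by auto
      then have xv: "x \<in> set v"
      proof (rule contrapos_np)
        assume "x \<notin> set v"
        then have "WDes u = insert 1 (Suc ` WDes v)" using vne by (simp add: u WDes_Cons)
        then show "1 \<in> Suc ` E" using W by simp
      qed
      then have "Suc ` WDes v = Suc ` E" using W by (simp add: u WDes_Cons)
      then have "WDes v = E" by (simp add: inj_image_eq_iff)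
      moreover have "packed v"
      proof -
        have "set u = set v" using xv u by auto
        then show ?thesis using uA by (simp add: A_def packed_words_def packed_def)
      qed
      ultimately have "(v, x) \<in> Sigma B set" using xv len by (auto simp: B_def packed_words_def)
      then show "u \<in> (\<lambda>(v, x). x # v) ` Sigma B set" using u by (auto simp: image_iff)
    qed
    show ?thesis using inj sub sup by (auto simp: bij_betw_def)
  qed
  have "T q (Suc n) (Suc ` E) = (\<Sum>u\<in>A. q ^ sinv u)" by (simp add: T_def A_def)
  also have "\<dots> = (\<Sum>(v, x)\<in>Sigma B set. q ^ sinv (x # v))"
    using sum.reindex_bij_betw[OF bij, of "\<lambda>u. q ^ sinv u"] by (simp add: case_prod_unfold)
  also have "\<dots> = (\<Sum>v\<in>B. \<Sum>x\<in>set v. q ^ sinv (x # v))"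
    by (rule sum.Sigma[symmetric]) (auto simp: B_def finite_packed_words)
  also have "\<dots> = (\<Sum>v\<in>B. q ^ sinv v * qint q (card E + 1))"
  proof (rule sum.cong[OF refl])
    fix v assume vB: "v \<in> B"
    then have "packed v" by (simp add: B_def packed_words_def)
    then have pv: "set v = {1..card (set v)}" by (rule packed_card)
    have vne: "v \<noteq> []" using vB n by (auto simp: B_def packed_words_def)
    have cv: "card (set v) = card E + 1" using card_set_WDes[OF vne] vB by (simp add: B_def)
    have "(\<Sum>x\<in>set v. q ^ sinv (x # v)) = (\<Sum>x\<in>{1..card E + 1}. q ^ sinv v * q ^ (x - 1))"
    proof (rule sum.cong)
      show "set v = {1..card E + 1}" using pv cv by simp
    next
      fix x assume x: "x \<in> {1..card E + 1}"
      have "card {y \<in> set v. y < x} = x - 1"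
        using x pv cv card_less_interval[of x "card E + 1"] by auto
      then show "q ^ sinv (x # v) = q ^ sinv v * q ^ (x - 1)"
        by (simp add: sinv_Cons' power_add)
    qed
    also have "\<dots> = q ^ sinv v * qint q (card E + 1)"
      by (simp only: qint_shift sum_distrib_left)
    finally show "(\<Sum>x\<in>set v. q ^ sinv (x # v)) = q ^ sinv v * qint q (card E + 1)" .
  qed
  also have "\<dots> = qint q (card E + 1) * T q n E"
    by (simp add: T_def B_def sum_distrib_left mult.commute)
  finally show ?thesis .
qed

definition sh :: "nat \<Rightarrow> nat \<Rightarrow> nat" where
  "sh x y = (if x \<le> y then Suc y else y)"

definition ush :: "nat \<Rightarrow> nat \<Rightarrow> nat" where
  "ush x y = (if x < y then y - 1 else y)"

lemma sh_strict: "strict_mono_on A (sh x)"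
  by (rule strict_mono_onI) (auto simp: sh_def)

lemma sh_inj: "inj (sh x)"
  by (rule injI) (auto simp: sh_def split: if_splits)

lemma sh_image: "1 \<le> x \<Longrightarrow> x \<le> Suc m \<Longrightarrow> sh x ` {1..m} = {1..Suc m} - {x}"
proof (rule set_eqI, rule iffI)
  fix z assume x: "1 \<le> x" "x \<le> Suc m" and "z \<in> sh x ` {1..m}"
  then show "z \<in> {1..Suc m} - {x}" by (auto simp: sh_def)
next
  fix z assume x: "1 \<le> x" "x \<le> Suc m" and z: "z \<in> {1..Suc m} - {x}"
  show "z \<in> sh x ` {1..m}"
  proof (cases "z < x")
    case True
    then have "sh x z = z" "z \<in> {1..m}" using x z by (auto simp: sh_def)
    then show ?thesis by (metis imageI)
  next
    case False
    then have "x < z" using z by auto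
    then have "sh x (z - 1) = z" "z - 1 \<in> {1..m}" using x z by (auto simp: sh_def)
    then show ?thesis by (metis imageI)
  qed
qed

lemma ush_strict: "x \<notin> A \<Longrightarrow> strict_mono_on A (ush x)"
proof (rule strict_mono_onI)
  fix r s assume "x \<notin> A" "r \<in> A" "s \<in> A" "r < s"
  then have "r \<noteq> x" "s \<noteq> x" "r < s" by auto
  then show "ush x r < ush x s" by (auto simp: ush_def)
qed

lemma sh_ush: "y \<noteq> x \<Longrightarrow> sh x (ush x y) = y"
  by (auto simp: sh_def ush_def)

lemma ush_image: "x \<in> {1..M} \<Longrightarrow> ush x ` ({1..M} - {x}) = {1..M - 1}"
proof (rule set_eqI, rule iffI)
  fix z assume x: "x \<in> {1..M}" and "z \<in> ush x ` ({1..M} - {x})"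
  then show "z \<in> {1..M - 1}" by (auto simp: ush_def)
next
  fix z assume x: "x \<in> {1..M}" and z: "z \<in> {1..M - 1}"
  show "z \<in> ush x ` ({1..M} - {x})"
  proof (cases "z < x")
    case True
    then have "ush x z = z" "z \<in> {1..M} - {x}" using x z by (auto simp: ush_def)
    then show ?thesis by (metis imageI)
  next
    case False
    then have "ush x (Suc z) = z" "Suc z \<in> {1..M} - {x}" using x z by (auto simp: ush_def)
    then show ?thesis by (metis imageI)
  qed
qed

lemma T_rec2:
  fixes q :: "'a::field"
  assumes n: "1 \<le> n" and E: "0 \<notin> E"
  shows "T q (Suc n) (insert 1 (Suc ` E)) = qint q (card E + 2) * T q n E"
proof -
  define B where "B = {v \<in> packed_words n. WDes v = E}"
  define A where "A = {u \<in> packed_words (Suc n). WDes u = insert 1 (Suc ` E)}"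
  define X where "X = (\<lambda>v::nat list. {1..card (set v) + 1})"
  define F where "F = (\<lambda>(v, x). x # map (sh x) v)"
  have cardB: "\<And>v. v \<in> B \<Longrightarrow> set v = {1..card E + 1} \<and> v \<noteq> [] \<and> card (set v) = card E + 1"
  proof -
    fix v assume vB: "v \<in> B"
    then have "packed v" by (simp add: B_def packed_words_def)
    then have pv: "set v = {1..card (set v)}" by (rule packed_card)
    have vne: "v \<noteq> []" using vB n by (auto simp: B_def packed_words_def)
    have cv: "card (set v) = card E + 1" using card_set_WDes[OF vne] vB by (simp add: B_def)
    show "set v = {1..card E + 1} \<and> v \<noteq> [] \<and> card (set v) = card E + 1" using pv cv vne by simp
  qed
  have key: "\<And>v x. v \<in> B \<Longrightarrow> x \<in> X v \<Longrightarrow>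
      F (v, x) \<in> A \<and> sinv (F (v, x)) = sinv v + (x - 1)"
  proof -
    fix v x assume vB: "v \<in> B" and x: "x \<in> X v"
    have sv: "set v = {1..card E + 1}" and vne: "v \<noteq> []" and cv: "card (set v) = card E + 1"
      using cardB[OF vB] by auto
    have x': "1 \<le> x" "x \<le> Suc (card E + 1)" using x cv by (auto simp: X_def)
    have sm: "set (map (sh x) v) = {1..Suc (card E + 1)} - {x}"
      using sh_image[OF x'] sv by simp
    have xn: "x \<notin> set (map (sh x) v)" using sm by simp
    have su: "set (F (v, x)) = {1..Suc (card E + 1)}" using sm x' by (auto simp: F_def)
    have "packed (F (v, x))" using su by (auto simp: packed_def)
    moreover have "length (F (v, x)) = Suc n" using vB by (simp add: F_def B_def packed_words_def)
    moreover have "WDes (F (v, x)) = insert 1 (Suc ` E)"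
      using xn vne vB by (simp add: F_def WDes_Cons WDes_map_mono[OF sh_strict] B_def)
    ultimately have "F (v, x) \<in> A" by (simp add: A_def packed_words_def)
    moreover have "sinv (F (v, x)) = sinv v + (x - 1)"
    proof -
      have "{y \<in> set (map (sh x) v). y < x} = {1..<x}" using sm x' by auto
      then have "card {y \<in> set (map (sh x) v). y < x} = x - 1" by simp
      then show ?thesis by (simp add: F_def sinv_Cons' sinv_map_mono[OF sh_strict])
    qed
    ultimately show "F (v, x) \<in> A \<and> sinv (F (v, x)) = sinv v + (x - 1)" by simp
  qed
  have bij: "bij_betw F (Sigma B X) A"
  proof -
    have inj: "inj_on F (Sigma B X)"
      by (auto simp: inj_on_def F_def inj_map_eq_map[OF sh_inj])
    have sub: "F ` Sigma B X \<subseteq> A" using key by auto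
    have sup: "A \<subseteq> F ` Sigma B X"
    proof
      fix u assume uA: "u \<in> A"
      have "length u = Suc n" using uA by (simp add: A_def packed_words_def)
      then obtain x w where u: "u = x # w" by (cases u) auto
      have len: "length w = n" using uA u by (auto simp: A_def packed_words_def)
      then have wne: "w \<noteq> []" using n by auto
      have W: "WDes u = insert 1 (Suc ` E)" using uA by (simp add: A_def)
      have xw: "x \<notin> set w"
      proof
        assume "x \<in> set w"
        then have h: "WDes u = Suc ` WDes w" by (simp add: u WDes_Cons)
        have "1 \<in> WDes u" using W by simp
        then have "1 \<in> Suc ` WDes w" using h by simp
        then show False using zero_notin_WDes[of w] by auto
      qed
      then have "insert 1 (Suc ` WDes w) = insert 1 (Suc ` E)" using W wne by (simp add: u WDes_Cons)
      moreover have "1 \<notin> Suc ` WDes w" "1 \<notin> Suc ` E" using E zero_notin_WDes[of w] by auto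
      ultimately have "Suc ` WDes w = Suc ` E" by (simp add: insert_ident)
      then have WE: "WDes w = E" by (simp add: inj_image_eq_iff)
      have "packed u" using uA by (simp add: A_def packed_words_def)
      then have su: "set u = {1..card (set u)}" by (rule packed_card)
      define M where "M = card (set u)"
      have xM: "x \<in> {1..M}" using su by (auto simp: M_def u)
      have sw: "set w = {1..M} - {x}" using su xw by (auto simp: M_def u)
      define v where "v = map (ush x) w"
      have wv: "map (sh x) v = w"
        unfolding v_def map_map
      proof (rule map_idI)
        fix y assume "y \<in> set w"
        then have "y \<noteq> x" using xw by auto
        then show "(sh x \<circ> ush x) y = y" by (simp add: sh_ush)
      qed
      have sv: "set v = {1..M - 1}" using ush_image[OF xM] sw by (simp add: v_def)
      have cv: "card (set v) = M - 1" using sv by simp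
      have "packed v" using sv by (auto simp: packed_def)
      moreover have "WDes v = E"
        using WE xw by (simp add: v_def WDes_map_mono[OF ush_strict])
      moreover have "length v = n" using len by (simp add: v_def)
      ultimately have vB: "v \<in> B" by (simp add: B_def packed_words_def)
      have "x \<in> X v" using xM cv by (auto simp: X_def)
      moreover have "F (v, x) = u" by (simp add: F_def wv u)
      ultimately show "u \<in> F ` Sigma B X" using vB by force
    qed
    show ?thesis using inj sub sup by (auto simp: bij_betw_def)
  qed
  have "T q (Suc n) (insert 1 (Suc ` E)) = (\<Sum>u\<in>A. q ^ sinv u)" by (simp add: T_def A_def)
  also have "\<dots> = (\<Sum>p\<in>Sigma B X. q ^ sinv (F p))"
    using sum.reindex_bij_betw[OF bij, of "\<lambda>u. q ^ sinv u"] by simp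
  also have "\<dots> = (\<Sum>v\<in>B. \<Sum>x\<in>X v. q ^ sinv (F (v, x)))"
    by (subst sum.Sigma) (auto simp: B_def finite_packed_words X_def case_prod_unfold)
  also have "\<dots> = (\<Sum>v\<in>B. q ^ sinv v * qint q (card E + 2))"
  proof (rule sum.cong[OF refl])
    fix v assume vB: "v \<in> B"
    have cv: "card (set v) = card E + 1" using cardB[OF vB] by auto
    have "(\<Sum>x\<in>X v. q ^ sinv (F (v, x))) = (\<Sum>x\<in>{1..card E + 2}. q ^ sinv v * q ^ (x - 1))"
    proof (rule sum.cong)
      show "X v = {1..card E + 2}" using cv by (simp add: X_def)
    next
      fix x assume x: "x \<in> {1..card E + 2}"
      then have "x \<in> X v" using cv by (simp add: X_def)
      then show "q ^ sinv (F (v, x)) = q ^ sinv v * q ^ (x - 1)"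
        using key[OF vB] by (simp add: power_add)
    qed
    also have "\<dots> = q ^ sinv v * qint q (card E + 2)"
      by (simp only: qint_shift sum_distrib_left)
    finally show "(\<Sum>x\<in>X v. q ^ sinv (F (v, x))) = q ^ sinv v * qint q (card E + 2)" .
  qed
  also have "\<dots> = qint q (card E + 2) * T q n E"
    by (simp add: T_def B_def sum_distrib_left mult.commute)
  finally show ?thesis .
qed




definition stS :: "nat set \<Rightarrow> nat set \<Rightarrow> nat" where
  "stS E D = card {(a, b). a \<in> E \<and> b \<in> D \<and> b \<le> a}"

lemma rank_sum:
  fixes F :: "nat set"
  assumes "finite F"
  shows "(\<Sum>d\<in>F. h (card {a \<in> F. a < d})) = (\<Sum>i<card F. h i)"
  using assms
proof (induction "card F" arbitrary: F)
  case 0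
  then show ?case by simp
next
  case (Suc k)
  then have Fne: "F \<noteq> {}" by auto
  define m where "m = Max F"
  have mF: "m \<in> F" using Fne Suc.prems by (simp add: m_def)
  define F' where "F' = F - {m}"
  have cF': "card F' = k" using Suc.hyps(2) mF Suc.prems by (simp add: F'_def)
  have fF': "finite F'" using Suc.prems by (simp add: F'_def)
  have "(\<Sum>d\<in>F. h (card {a \<in> F. a < d})) = h (card {a \<in> F. a < m}) + (\<Sum>d\<in>F'. h (card {a \<in> F. a < d}))"
    using mF Suc.prems by (simp add: F'_def sum.remove)
  also have "{a \<in> F. a < m} = F'"
  proof -
    have "\<And>a. a \<in> F \<Longrightarrow> a \<le> m" using Suc.prems by (simp add: m_def)
    then show ?thesis by (auto simp: F'_def order.order_iff_strict)
  qed
  also have "(\<Sum>d\<in>F'. h (card {a \<in> F. a < d})) = (\<Sum>d\<in>F'. h (card {a \<in> F'. a < d}))"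
  proof (rule sum.cong[OF refl])
    fix d assume d: "d \<in> F'"
    have "d \<in> F" "d \<noteq> m" using d by (auto simp: F'_def)
    moreover have "d \<le> m" using Suc.prems Max_ge[of F d] \<open>d \<in> F\<close> by (simp add: m_def)
    ultimately have "d < m" by simp
    then have "{a \<in> F. a < d} = {a \<in> F'. a < d}" by (auto simp: F'_def)
    then show "h (card {a \<in> F. a < d}) = h (card {a \<in> F'. a < d})" by simp
  qed
  also have "\<dots> = (\<Sum>i<k. h i)" using Suc.hyps(1)[OF cF'[symmetric] fF'] cF' by simp
  finally show ?case using cF' Suc.hyps(2)[symmetric] by (simp add: lessThan_Suc add.commute)
qed

lemma stS_insert:
  assumes fE: "finite E" and fD: "finite D" and d: "d \<notin> D"
  shows "stS E (insert d D) = stS E D + card {a \<in> E. d \<le> a}"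
proof -
  have eq: "{(a, b). a \<in> E \<and> b \<in> insert d D \<and> b \<le> a} =
      {(a, b). a \<in> E \<and> b \<in> D \<and> b \<le> a} \<union> (\<lambda>a. (a, d)) ` {a \<in> E. d \<le> a}"
    by auto
  have f1: "finite {(a, b). a \<in> E \<and> b \<in> D \<and> b \<le> a}"
    by (rule finite_subset[of _ "E \<times> D"]) (use fE fD in auto)
  have "stS E (insert d D) = card ({(a, b). a \<in> E \<and> b \<in> D \<and> b \<le> a} \<union> (\<lambda>a. (a, d)) ` {a \<in> E. d \<le> a})"
    by (simp only: stS_def eq)
  also have "\<dots> = card {(a, b). a \<in> E \<and> b \<in> D \<and> b \<le> a} + card ((\<lambda>a. (a, d)) ` {a \<in> E. d \<le> a})"
    by (rule card_Un_disjoint) (use f1 fE d in auto)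
  also have "card ((\<lambda>a. (a, d)) ` {a \<in> E. d \<le> a}) = card {a \<in> E. d \<le> a}"
    by (rule card_image) (auto simp: inj_on_def)
  finally show ?thesis by (simp only: stS_def)
qed

lemma exponent_eq:
  fixes E D :: "nat set"
  assumes fE: "finite E" and DE: "D \<subseteq> E" and d: "d \<in> E - D"
  shows "card {b \<in> D. b < d} + card {a \<in> E. d \<le> a} = card E - card {a \<in> E - D. a < d}"
proof -
  have fD: "finite D" using fE DE finite_subset by blast
  have c1: "card E = card {a \<in> E. a < d} + card {a \<in> E. d \<le> a}"
  proof -
    have "E = {a \<in> E. a < d} \<union> {a \<in> E. d \<le> a}" by auto
    then have "card E = card ({a \<in> E. a < d} \<union> {a \<in> E. d \<le> a})" by simp
    also have "\<dots> = card {a \<in> E. a < d} + card {a \<in> E. d \<le> a}"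
      by (rule card_Un_disjoint) (use fE in auto)
    finally show ?thesis .
  qed
  have c2: "card {a \<in> E. a < d} = card {b \<in> D. b < d} + card {a \<in> E - D. a < d}"
  proof -
    have "{a \<in> E. a < d} = {b \<in> D. b < d} \<union> {a \<in> E - D. a < d}" using DE by auto
    then have "card {a \<in> E. a < d} = card ({b \<in> D. b < d} \<union> {a \<in> E - D. a < d})" by simp
    also have "\<dots> = card {b \<in> D. b < d} + card {a \<in> E - D. a < d}"
      by (rule card_Un_disjoint) (use fE fD in auto)
    finally show ?thesis .
  qed
  show ?thesis using c1 c2 by linarith
qed

lemma qint_diff:
  fixes q :: "'a::comm_ring_1"
  shows "m \<le> N \<Longrightarrow> qint q (Suc N) - qint q (Suc m) = (\<Sum>j\<in>{Suc m..N}. q ^ j)"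
proof (induction N)
  case 0 then show ?case by simp
next
  case (Suc N)
  show ?case
  proof (cases "m = Suc N")
    case True then show ?thesis by simp
  next
    case False
    then have "m \<le> N" using Suc.prems by simp
    then have "qint q (Suc (Suc N)) - qint q (Suc m) = (\<Sum>j\<in>{Suc m..N}. q ^ j) + q ^ Suc N"
      using Suc.IH by (simp add: qint_def lessThan_Suc algebra_simps)
    also have "\<dots> = (\<Sum>j\<in>{Suc m..Suc N}. q ^ j)"
      using \<open>m \<le> N\<close> by (simp add: sum.cl_ivl_Suc)
    finally show ?thesis .
  qed
qed

lemma inner_sum:
  fixes q :: "'a::comm_ring_1" and E D :: "nat set"
  assumes fE: "finite E" and DE: "D \<subseteq> E"
  shows "(\<Sum>d\<in>E - D. q ^ (card {b \<in> D. b < d} + card {a \<in> E. d \<le> a}))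
       = qint q (card E + 1) - qint q (card D + 1)"
proof -
  define F where "F = E - D"
  have fF: "finite F" using fE by (simp add: F_def)
  have fD: "finite D" using fE DE finite_subset by blast
  have cF: "card F = card E - card D" using DE fD by (simp add: F_def card_Diff_subset)
  have cDE: "card D \<le> card E" using DE fE by (simp add: card_mono)
  have "(\<Sum>d\<in>E - D. q ^ (card {b \<in> D. b < d} + card {a \<in> E. d \<le> a}))
      = (\<Sum>d\<in>F. q ^ (card E - card {a \<in> F. a < d}))"
    unfolding F_def by (rule sum.cong[OF refl]) (simp add: exponent_eq[OF fE DE])
  also have "\<dots> = (\<Sum>i<card F. q ^ (card E - i))"
    by (rule rank_sum[OF fF])
  also have "\<dots> = (\<Sum>j\<in>{Suc (card D)..card E}. q ^ j)"
    by (rule sum.reindex_bij_witness[where i="\<lambda>b. card E - b" and j="\<lambda>a. card E - a"])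
      (use cF cDE in auto)
  also have "\<dots> = qint q (card E + 1) - qint q (card D + 1)"
    using qint_diff[OF cDE, of q] by simp
  finally show ?thesis .
qed

lemma pair_reindex:
  fixes E :: "nat set"
  assumes fE: "finite E"
  shows "(\<Sum>D\<in>Pow E. \<Sum>d\<in>D. G D d) = (\<Sum>D\<in>Pow E. \<Sum>d\<in>E - D. G (insert d D) d)"
proof -
  have fP: "finite (Pow E)" using fE by simp
  have "(\<Sum>D\<in>Pow E. \<Sum>d\<in>D. G D d) = (\<Sum>(D, d)\<in>Sigma (Pow E) (\<lambda>D. D). G D d)"
    by (rule sum.Sigma) (use fE finite_subset in auto)
  also have "\<dots> = (\<Sum>(D, d)\<in>Sigma (Pow E) (\<lambda>D. E - D). G (insert d D) d)"
    by (rule sum.reindex_bij_witness[where i="\<lambda>(D, d). (insert d D, d)" and j="\<lambda>(D, d). (D - {d}, d)"])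
      (auto simp: insert_absorb)
  also have "\<dots> = (\<Sum>D\<in>Pow E. \<Sum>d\<in>E - D. G (insert d D) d)"
    by (rule sum.Sigma[symmetric]) (use fE in auto)
  finally show ?thesis .
qed

lemma set_lemma:
  fixes q :: "'a::comm_ring_1" and E :: "nat set"
  assumes fE: "finite E"
  shows "(\<Sum>D\<in>Pow E. q ^ stS E D * (\<Sum>d\<in>D. q ^ card {b \<in> D. b < d} * g (D - {d})))
       = (\<Sum>D\<in>Pow E. (qint q (card E + 1) - qint q (card D + 1)) * g D * q ^ stS E D)"
proof -
  have "(\<Sum>D\<in>Pow E. q ^ stS E D * (\<Sum>d\<in>D. q ^ card {b \<in> D. b < d} * g (D - {d})))
      = (\<Sum>D\<in>Pow E. \<Sum>d\<in>D. q ^ stS E D * (q ^ card {b \<in> D. b < d} * g (D - {d})))"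
    by (simp add: sum_distrib_left)
  also have "\<dots> = (\<Sum>D\<in>Pow E. \<Sum>d\<in>E - D. q ^ stS E (insert d D) *
        (q ^ card {b \<in> insert d D. b < d} * g (insert d D - {d})))"
    by (rule pair_reindex[OF fE])
  also have "\<dots> = (\<Sum>D\<in>Pow E. g D * q ^ stS E D *
        (\<Sum>d\<in>E - D. q ^ (card {b \<in> D. b < d} + card {a \<in> E. d \<le> a})))"
  proof (rule sum.cong[OF refl])
    fix D assume D: "D \<in> Pow E"
    have fD: "finite D" using D fE finite_subset by auto
    show "(\<Sum>d\<in>E - D. q ^ stS E (insert d D) * (q ^ card {b \<in> insert d D. b < d} * g (insert d D - {d})))
        = g D * q ^ stS E D * (\<Sum>d\<in>E - D. q ^ (card {b \<in> D. b < d} + card {a \<in> E. d \<le> a}))"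
      unfolding sum_distrib_left
    proof (rule sum.cong[OF refl])
      fix d assume d: "d \<in> E - D"
      have "{b \<in> insert d D. b < d} = {b \<in> D. b < d}" by auto
      moreover have "insert d D - {d} = D" using d by auto
      ultimately show "q ^ stS E (insert d D) * (q ^ card {b \<in> insert d D. b < d} * g (insert d D - {d}))
          = g D * q ^ stS E D * q ^ (card {b \<in> D. b < d} + card {a \<in> E. d \<le> a})"
        using d by (simp add: stS_insert[OF fE fD] power_add mult_ac)
    qed
  qed
  also have "\<dots> = (\<Sum>D\<in>Pow E. (qint q (card E + 1) - qint q (card D + 1)) * g D * q ^ stS E D)"
    by (rule sum.cong[OF refl]) (simp add: inner_sum[OF fE] mult_ac)
  finally show ?thesis .
qed




lemma comps_mem: "J \<in> comps n \<longleftrightarrow> composition J \<and> sum_list J = n"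
  by (simp add: comps_def)

lemma comps_Des_bij: "1 \<le> n \<Longrightarrow> bij_betw Des (comps n) (Pow {1..<n})"
proof -
  assume n: "1 \<le> n"
  have "inj_on Des (comps n)" by (rule inj_onI) (auto simp: comps_mem intro: Des_inj)
  moreover have "Des ` comps n \<subseteq> Pow {1..<n}"
  proof
    fix D assume "D \<in> Des ` comps n"
    then obtain K where "K \<in> comps n" "D = Des K" by auto
    then show "D \<in> Pow {1..<n}" using Des_sub[of K] by (simp add: comps_mem)
  qed
  moreover have "Pow {1..<n} \<subseteq> Des ` comps n"
  proof
    fix D assume "D \<in> Pow {1..<n}"
    then obtain K where "composition K" "sum_list K = n" "Des K = D" using Des_surj[OF n] by blast
    then show "D \<in> Des ` comps n" by (auto simp: comps_mem)
  qed
  ultimately show ?thesis unfolding bij_betw_def by blast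
qed

lemma finite_comps: "1 \<le> n \<Longrightarrow> finite (comps n)"
  using bij_betw_finite[OF comps_Des_bij] by simp

lemma comps_ne: "J \<in> comps n \<Longrightarrow> 1 \<le> n \<Longrightarrow> J \<noteq> []"
  by (auto simp: comps_mem)

lemma zero_notin_Des: "composition J \<Longrightarrow> 0 \<notin> Des J"
  using Des_bounds by blast

definition phi :: "nat list \<Rightarrow> nat list" where
  "phi J = Suc (hd J) # tl J"

lemma Des_phi: "J \<noteq> [] \<Longrightarrow> Des (phi J) = Suc ` Des J"
proof -
  assume "J \<noteq> []"
  then obtain a T where J: "J = a # T" by (cases J) auto
  show ?thesis by (auto simp: J phi_def Des_Cons image_image)
qed

lemma Des_one: "J \<noteq> [] \<Longrightarrow> Des (1 # J) = insert 1 (Suc ` Des J)"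
  by (simp add: Des_Cons image_image)

lemma phi_comps: "J \<in> comps n \<Longrightarrow> 1 \<le> n \<Longrightarrow> phi J \<in> comps (Suc n)"
proof -
  assume "J \<in> comps n" "1 \<le> n"
  then obtain a T where J: "J = a # T" "composition J" "sum_list J = n" by (cases J) (auto simp: comps_mem)
  then show ?thesis by (simp add: phi_def comps_mem)
qed

lemma one_comps: "J \<in> comps n \<Longrightarrow> 1 # J \<in> comps (Suc n)"
  by (simp add: comps_mem)

lemma comps_Suc: "1 \<le> n \<Longrightarrow> comps (Suc n) = Cons 1 ` comps n \<union> phi ` comps n"
proof (rule set_eqI, rule iffI)
  fix J' assume n: "1 \<le> n" and J': "J' \<in> comps (Suc n)"
  then obtain a T where J: "J' = a # T" by (cases J') (auto simp: comps_mem)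
  have a: "0 < a" "composition T" "a + sum_list T = Suc n" using J' J by (auto simp: comps_mem)
  show "J' \<in> Cons 1 ` comps n \<union> phi ` comps n"
  proof (cases "a = 1")
    case True
    then have "T \<in> comps n" using a by (simp add: comps_mem)
    then show ?thesis using J True by auto
  next
    case False
    then have "(a - 1) # T \<in> comps n" using a by (simp add: comps_mem)
    moreover have "phi ((a - 1) # T) = J'" using J a False by (simp add: phi_def)
    ultimately show ?thesis by (metis UnI2 imageI)
  qed
next
  fix J' assume n: "1 \<le> n" and "J' \<in> Cons 1 ` comps n \<union> phi ` comps n"
  then show "J' \<in> comps (Suc n)" using phi_comps one_comps by auto
qed

lemma sum_comps_Suc:
  assumes n: "1 \<le> n"
  shows "(\<Sum>J'\<in>comps (Suc n). f J') = (\<Sum>J\<in>comps n. f (1 # J)) + (\<Sum>J\<in>comps n. f (phi J))"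
proof -
  have fin: "finite (comps n)" using finite_comps[OF n] .
  have inj1: "inj_on (Cons 1) (comps n)" by (auto simp: inj_on_def)
  have inj2: "inj_on phi (comps n)"
  proof (rule inj_onI)
    fix J K assume "J \<in> comps n" "K \<in> comps n" "phi J = phi K"
    moreover have "J \<noteq> []" "K \<noteq> []" using comps_ne n \<open>J \<in> comps n\<close> \<open>K \<in> comps n\<close> by auto
    ultimately show "J = K" by (cases J; cases K) (auto simp: phi_def)
  qed
  have disj: "Cons 1 ` comps n \<inter> phi ` comps n = {}"
  proof -
    have "\<And>J. J \<in> comps n \<Longrightarrow> hd (phi J) \<noteq> 1"
      using comps_ne[OF _ n] by (auto simp: phi_def comps_mem composition_def)
    then show ?thesis
    proof (intro equalityI subsetI)
      fix x assume h: "\<And>J. J \<in> comps n \<Longrightarrow> hd (phi J) \<noteq> 1" and x: "x \<in> Cons 1 ` comps n \<inter> phi ` comps n"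
      then obtain J where "J \<in> comps n" "x = phi J" by blast
      moreover obtain K where "x = 1 # K" using x by blast
      then have "hd x = 1" by simp
      ultimately show "x \<in> {}" using h by auto
    qed simp
  qed
  have "(\<Sum>J'\<in>comps (Suc n). f J') = (\<Sum>J'\<in>Cons 1 ` comps n. f J') + (\<Sum>J'\<in>phi ` comps n. f J')"
    unfolding comps_Suc[OF n] by (rule sum.union_disjoint) (use fin disj in auto)
  also have "\<dots> = (\<Sum>J\<in>comps n. f (1 # J)) + (\<Sum>J\<in>comps n. f (phi J))"
    using sum.reindex[OF inj1, of f] sum.reindex[OF inj2, of f] by (simp add: o_def)
  finally show ?thesis .
qed

lemma Lq_alt: "Lq q J K = (if Des J \<subseteq> Des K then q ^ stS (Des K) (Des J) else 0)"
  by (simp add: Lq_def comp_le_def st_def stS_def)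

lemma stS_Suc: "stS (Suc ` E) (Suc ` D) = stS E D"
proof -
  have "{(a, b). a \<in> Suc ` E \<and> b \<in> Suc ` D \<and> b \<le> a} = map_prod Suc Suc ` {(a, b). a \<in> E \<and> b \<in> D \<and> b \<le> a}"
    by auto
  moreover have "inj (map_prod Suc Suc)" by (auto simp: inj_def)
  ultimately show ?thesis unfolding stS_def by (simp add: card_image inj_on_subset)
qed

lemma stS_ins_Suc: "0 \<notin> D \<Longrightarrow> stS (insert 1 (Suc ` E)) (Suc ` D) = stS E D"
proof -
  assume D: "0 \<notin> D"
  have "{(a, b). a \<in> insert 1 (Suc ` E) \<and> b \<in> Suc ` D \<and> b \<le> a} = {(a, b). a \<in> Suc ` E \<and> b \<in> Suc ` D \<and> b \<le> a}"
    using D by auto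
  then show ?thesis using stS_Suc[of E D] by (simp add: stS_def)
qed

lemma stS_ins_ins:
  assumes fE: "finite E" and fD: "finite D" and E: "0 \<notin> E" and D: "0 \<notin> D"
  shows "stS (insert 1 (Suc ` E)) (insert 1 (Suc ` D)) = stS E D + (card E + 1)"
proof -
  have "stS (insert 1 (Suc ` E)) (insert 1 (Suc ` D)) = stS (insert 1 (Suc ` E)) (Suc ` D) + card {a \<in> insert 1 (Suc ` E). 1 \<le> a}"
    by (rule stS_insert) (use fE fD D in auto)
  also have "{a \<in> insert 1 (Suc ` E). 1 \<le> a} = insert 1 (Suc ` E)" by auto
  also have "card (insert 1 (Suc ` E)) = card E + 1"
    using fE E by (simp add: card_image image_iff)
  finally show ?thesis using stS_ins_Suc[OF D] by simp
qed




definition Sol :: "'a::field \<Rightarrow> nat \<Rightarrow> (nat list \<Rightarrow> 'a) \<Rightarrow> bool" where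
  "Sol q n c \<longleftrightarrow> (\<forall>J. J \<notin> comps n \<longrightarrow> c J = 0) \<and>
      (\<forall>K\<in>comps n. S1n q n K = (\<Sum>J\<in>comps n. c J * Lq q J K))"

lemma Sol_unique:
  fixes q :: "'a::field"
  assumes q: "q \<noteq> 0" and n: "1 \<le> n" and c1: "Sol q n c1" and c2: "Sol q n c2"
  shows "c1 = c2"
proof -
  have fin: "finite (comps n)" using finite_comps[OF n] .
  have main: "K \<in> comps n \<Longrightarrow> c1 K = c2 K" for K
  proof (induction "card (Des K)" arbitrary: K rule: less_induct)
    case less
    have eq: "(\<Sum>J\<in>comps n. c1 J * Lq q J K) = (\<Sum>J\<in>comps n. c2 J * Lq q J K)"
      using c1 c2 less.prems by (simp add: Sol_def)
    have rest: "(\<Sum>J\<in>comps n - {K}. c1 J * Lq q J K) = (\<Sum>J\<in>comps n - {K}. c2 J * Lq q J K)"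
    proof (rule sum.cong[OF refl])
      fix J assume J: "J \<in> comps n - {K}"
      show "c1 J * Lq q J K = c2 J * Lq q J K"
      proof (cases "Des J \<subseteq> Des K")
        case True
        have "Des J \<noteq> Des K"
          using J less.prems Des_inj[of J K] by (auto simp: comps_mem)
        then have "card (Des J) < card (Des K)" using True by (simp add: psubset_card_mono)
        then have "c1 J = c2 J" using less.hyps J by auto
        then show ?thesis by simp
      next
        case False then show ?thesis by (simp add: Lq_alt)
      qed
    qed
    have "c1 K * Lq q K K + (\<Sum>J\<in>comps n - {K}. c1 J * Lq q J K) = c2 K * Lq q K K + (\<Sum>J\<in>comps n - {K}. c2 J * Lq q J K)"
      using eq less.prems fin by (simp add: sum.remove)
    then have "c1 K * Lq q K K = c2 K * Lq q K K" using rest by simp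
    moreover have "Lq q K K \<noteq> 0" using q by (simp add: Lq_alt)
    ultimately show ?case by simp
  qed
  show ?thesis
  proof
    fix K show "c1 K = c2 K"
      using main c1 c2 by (cases "K \<in> comps n") (auto simp: Sol_def)
  qed
qed

lemma ecoef_Sol:
  fixes q :: "'a::field"
  assumes q: "q \<noteq> 0" and n: "1 \<le> n" and c: "Sol q n c" and J: "J \<in> comps n"
  shows "ecoef q J = c J"
proof -
  have sJ: "sum_list J = n" using J by (simp add: comps_mem)
  have "(THE c. (\<forall>J. J \<notin> comps n \<longrightarrow> c J = 0) \<and>
             (\<forall>K\<in>comps n. S1n q n K = (\<Sum>J\<in>comps n. c J * Lq q J K))) = c"
  proof (rule the_equality)
    show "(\<forall>J. J \<notin> comps n \<longrightarrow> c J = 0) \<and> (\<forall>K\<in>comps n. S1n q n K = (\<Sum>J\<in>comps n. c J * Lq q J K))"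
      using c by (simp add: Sol_def)
  next
    fix c' assume "(\<forall>J. J \<notin> comps n \<longrightarrow> c' J = 0) \<and> (\<forall>K\<in>comps n. S1n q n K = (\<Sum>J\<in>comps n. c' J * Lq q J K))"
    then have "Sol q n c'" by (simp add: Sol_def)
    then show "c' = c" using Sol_unique[OF q n _ c] by simp
  qed
  then show ?thesis by (simp add: ecoef_def sJ Let_def)
qed

lemma comps_one: "comps 1 = {[1]}"
proof (rule set_eqI, rule iffI)
  fix J assume "J \<in> comps 1"
  then have J: "composition J" "sum_list J = 1" by (auto simp: comps_mem)
  then obtain a T where JT: "J = a # T" by (cases J) auto
  have "T = []" using J JT composition_sum_pos[of T] by (cases "T = []") auto
  then show "J \<in> {[1]}" using J JT by simp
qed (simp add: comps_mem)

lemma Sol_base: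
  fixes q :: "'a::field"
  assumes q: "q \<noteq> 0"
  shows "Sol q 1 (\<lambda>J. if J = [1] then 1 else 0)"
proof -
  have pw: "{u \<in> packed_words 1. WDes u = {}} = {[1]}"
  proof (rule set_eqI, rule iffI)
    fix u assume "u \<in> {u \<in> packed_words 1. WDes u = {}}"
    then have u: "packed u" "length u = 1" by (auto simp: packed_words_def)
    then obtain a where a: "u = [a]" using length_Suc_conv[of u 0] by auto
    obtain m where "{a} = {1..m}" using u a by (auto simp: packed_def)
    then have "a = 1" by (metis atLeastAtMost_singleton_iff)
    then show "u \<in> {[1]}" using a by simp
  next
    fix u assume "u \<in> {[1::nat]}"
    then show "u \<in> {u \<in> packed_words 1. WDes u = {}}"
      using packed_one by (auto simp: packed_words_def WDes_def)
  qed
  have "S1n q 1 [1] = T q 1 (Des [1])" using S1n_T[OF q, of "[1]"] by simp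
  also have "\<dots> = 1" using pw by (simp add: T_def sinv_single)
  finally have S: "S1n q 1 [1] = 1" .
  have L: "Lq q [1] [1] = 1" by (simp add: Lq_alt stS_def)
  show ?thesis unfolding Sol_def comps_one using S L by simp
qed




definition Mc :: "'a::field \<Rightarrow> (nat list \<Rightarrow> 'a) \<Rightarrow> nat list \<Rightarrow> 'a" where
  "Mc q c J = (\<Sum>k\<in>{1..<length J}. q ^ (k - 1) * c (mergeAt J k))"

definition cmp :: "nat \<Rightarrow> nat set \<Rightarrow> nat list" where
  "cmp n D = the_inv_into (comps n) Des D"

lemma cmp_bij: "1 \<le> n \<Longrightarrow> bij_betw (cmp n) (Pow {1..<n}) (comps n)"
  unfolding cmp_def by (rule bij_betw_the_inv_into[OF comps_Des_bij])

lemma cmp_props: "1 \<le> n \<Longrightarrow> D \<in> Pow {1..<n} \<Longrightarrow> cmp n D \<in> comps n \<and> Des (cmp n D) = D"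
proof -
  assume n: "1 \<le> n" and D: "D \<in> Pow {1..<n}"
  have "cmp n D \<in> comps n" using cmp_bij[OF n] D by (auto simp: bij_betw_def)
  moreover have "Des (cmp n D) = D"
    unfolding cmp_def by (rule f_the_inv_into_f_bij_betw[OF comps_Des_bij[OF n]]) (use D in simp)
  ultimately show ?thesis by simp
qed

lemma cmp_Des: "1 \<le> n \<Longrightarrow> J \<in> comps n \<Longrightarrow> cmp n (Des J) = J"
  unfolding cmp_def using comps_Des_bij[of n] by (simp add: bij_betw_def the_inv_into_f_f)

lemma Mc_alt:
  fixes q :: "'a::field"
  assumes n: "1 \<le> n" and J: "J \<in> comps n"
  shows "Mc q c J = (\<Sum>d\<in>Des J. q ^ card {b \<in> Des J. b < d} * c (cmp n (Des J - {d})))"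
proof -
  have comp: "composition J" "sum_list J = n" using J by (auto simp: comps_mem)
  have "Mc q c J = (\<Sum>k\<in>{1..<length J}. (\<lambda>d. q ^ card {b \<in> Des J. b < d} * c (cmp n (Des J - {d}))) (sum_list (take k J)))"
    unfolding Mc_def
  proof (rule sum.cong[OF refl])
    fix k assume k: "k \<in> {1..<length J}"
    have m: "composition (mergeAt J k) \<and> sum_list (mergeAt J k) = sum_list J \<and>
        Des (mergeAt J k) = Des J - {sum_list (take k J)} \<and> mergeAt J k \<noteq> []"
      using mergeAt_props[OF comp(1)] k by auto
    then have "mergeAt J k \<in> comps n" using comp by (simp add: comps_mem)
    then have "cmp n (Des J - {sum_list (take k J)}) = mergeAt J k" using cmp_Des[OF n] m by metis
    moreover have "card {b \<in> Des J. b < sum_list (take k J)} = k - 1" using ps_rank[OF comp(1)] k by auto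
    ultimately show "q ^ (k - 1) * c (mergeAt J k) =
        (\<lambda>d. q ^ card {b \<in> Des J. b < d} * c (cmp n (Des J - {d}))) (sum_list (take k J))" by simp
  qed
  also have "\<dots> = (\<Sum>d\<in>Des J. q ^ card {b \<in> Des J. b < d} * c (cmp n (Des J - {d})))"
    by (rule sum.reindex_bij_betw[OF ps_bij[OF comp(1)]])
  finally show ?thesis .
qed

lemma sum_Lq:
  fixes q :: "'a::field"
  assumes n: "1 \<le> n" and K: "K \<in> comps n"
  shows "(\<Sum>J\<in>comps n. H J * Lq q J K) = (\<Sum>D\<in>Pow (Des K). H (cmp n D) * q ^ stS (Des K) D)"
proof -
  have EK: "Des K \<subseteq> {1..<n}" using K Des_sub by (auto simp: comps_mem)
  have "(\<Sum>J\<in>comps n. H J * Lq q J K) = (\<Sum>D\<in>Pow {1..<n}. H (cmp n D) * Lq q (cmp n D) K)"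
    by (rule sum.reindex_bij_betw[OF cmp_bij[OF n], symmetric])
  also have "\<dots> = (\<Sum>D\<in>Pow {1..<n}. if D \<subseteq> Des K then H (cmp n D) * q ^ stS (Des K) D else 0)"
    by (rule sum.cong[OF refl]) (simp add: Lq_alt cmp_props[OF n])
  also have "\<dots> = (\<Sum>D\<in>{D \<in> Pow {1..<n}. D \<subseteq> Des K}. H (cmp n D) * q ^ stS (Des K) D)"
    by (rule sum.inter_filter[symmetric]) simp
  also have "{D \<in> Pow {1..<n}. D \<subseteq> Des K} = Pow (Des K)" using EK by auto
  finally show ?thesis .
qed

lemma star:
  fixes q :: "'a::field"
  assumes n: "1 \<le> n" and K: "K \<in> comps n"
  shows "(\<Sum>J\<in>comps n. Mc q c J * Lq q J K)
       = (\<Sum>J\<in>comps n. ((qint q (length K) - qint q (length J)) * c J) * Lq q J K)"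
proof -
  define E where "E = Des K"
  have EK: "E \<subseteq> {1..<n}" using K Des_sub by (auto simp: comps_mem E_def)
  have fE: "finite E" by (simp add: E_def)
  have Kne: "K \<noteq> []" using comps_ne[OF K n] .
  have lK: "length K = card E + 1"
    using K Kne card_Des[of K] by (auto simp: comps_mem E_def)
  define g where "g = (\<lambda>D. c (cmp n D))"
  have DP: "\<And>D. D \<in> Pow E \<Longrightarrow> D \<in> Pow {1..<n}" using EK by auto
  have "(\<Sum>J\<in>comps n. Mc q c J * Lq q J K) = (\<Sum>D\<in>Pow E. Mc q c (cmp n D) * q ^ stS E D)"
    unfolding E_def by (rule sum_Lq[OF n K])
  also have "\<dots> = (\<Sum>D\<in>Pow E. q ^ stS E D * (\<Sum>d\<in>D. q ^ card {b \<in> D. b < d} * g (D - {d})))"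
  proof (rule sum.cong[OF refl])
    fix D assume D: "D \<in> Pow E"
    have c: "cmp n D \<in> comps n" "Des (cmp n D) = D" using cmp_props[OF n DP[OF D]] by auto
    show "Mc q c (cmp n D) * q ^ stS E D = q ^ stS E D * (\<Sum>d\<in>D. q ^ card {b \<in> D. b < d} * g (D - {d}))"
      using Mc_alt[OF n c(1), of q c] c(2) by (simp add: g_def mult.commute)
  qed
  also have "\<dots> = (\<Sum>D\<in>Pow E. (qint q (card E + 1) - qint q (card D + 1)) * g D * q ^ stS E D)"
    by (rule set_lemma[OF fE])
  also have "\<dots> = (\<Sum>D\<in>Pow E. ((qint q (length K) - qint q (length (cmp n D))) * c (cmp n D)) * q ^ stS E D)"
  proof (rule sum.cong[OF refl])
    fix D assume D: "D \<in> Pow E"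
    have c: "cmp n D \<in> comps n" "Des (cmp n D) = D" using cmp_props[OF n DP[OF D]] by auto
    have "length (cmp n D) = card D + 1"
      using c comps_ne[OF c(1) n] card_Des[of "cmp n D"] by (auto simp: comps_mem)
    then show "(qint q (card E + 1) - qint q (card D + 1)) * g D * q ^ stS E D
        = ((qint q (length K) - qint q (length (cmp n D))) * c (cmp n D)) * q ^ stS E D"
      using lK by (simp add: g_def)
  qed
  also have "\<dots> = (\<Sum>J\<in>comps n. ((qint q (length K) - qint q (length J)) * c J) * Lq q J K)"
    unfolding E_def by (rule sum_Lq[OF n K, symmetric])
  finally show ?thesis .
qed




definition ext :: "'a::field \<Rightarrow> nat \<Rightarrow> (nat list \<Rightarrow> 'a) \<Rightarrow> nat list \<Rightarrow> 'a" where
  "ext q n c J' = (if J' \<in> comps (Suc n) then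
      (if hd J' = 1 then c (tl J')
       else qint q (length J') * c ((hd J' - 1) # tl J') + Mc q c ((hd J' - 1) # tl J'))
    else 0)"

lemma ext_one: "J \<in> comps n \<Longrightarrow> ext q n c (1 # J) = c J"
  using one_comps[of J n] by (simp add: ext_def)

lemma ext_one': "J \<in> comps n \<Longrightarrow> ext q n c (Suc 0 # J) = c J"
  using ext_one[of J n q c] by simp

lemma ext_phi:
  assumes n: "1 \<le> n" and J: "J \<in> comps n"
  shows "ext q n c (phi J) = qint q (length J) * c J + Mc q c J"
proof -
  obtain a T where JT: "J = a # T" using comps_ne[OF J n] by (cases J) auto
  have "0 < a" using J JT by (simp add: comps_mem)
  then show ?thesis using phi_comps[OF J n] JT by (simp add: ext_def phi_def)
qed

lemma Lq_cases:
  assumes n: "1 \<le> n" and J: "J \<in> comps n" and K: "K \<in> comps n"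
  shows "Lq q (1 # J) (phi K) = 0"
    and "Lq q (phi J) (phi K) = Lq q J K"
    and "Lq q (1 # J) (1 # K) = q ^ length K * Lq q J K"
    and "Lq q (phi J) (1 # K) = Lq q J K"
proof -
  have Jne: "J \<noteq> []" and Kne: "K \<noteq> []" using comps_ne J K n by auto
  have cJ: "composition J" and cK: "composition K" using J K by (auto simp: comps_mem)
  have zJ: "0 \<notin> Des J" and zK: "0 \<notin> Des K" using zero_notin_Des cJ cK by auto
  have lK: "length K = card (Des K) + 1" using card_Des[OF cK] Kne by simp
  show "Lq q (1 # J) (phi K) = 0"
    unfolding Lq_alt Des_one[OF Jne] Des_phi[OF Kne] using zK by auto
  show "Lq q (phi J) (phi K) = Lq q J K"
    by (simp add: Lq_alt Des_phi[OF Jne] Des_phi[OF Kne] stS_Suc inj_image_subset_iff)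
  have sub1: "insert 1 (Suc ` Des J) \<subseteq> insert 1 (Suc ` Des K) \<longleftrightarrow> Des J \<subseteq> Des K"
    using zJ by auto
  show "Lq q (1 # J) (1 # K) = q ^ length K * Lq q J K"
  proof -
    have st: "stS (insert 1 (Suc ` Des K)) (insert 1 (Suc ` Des J)) = stS (Des K) (Des J) + (card (Des K) + 1)"
      using stS_ins_ins[of "Des K" "Des J"] zK zJ by simp
    show ?thesis unfolding Lq_alt Des_one[OF Jne] Des_one[OF Kne] st using sub1 lK by (simp add: power_add mult_ac)
  qed
  have sub2: "Suc ` Des J \<subseteq> insert 1 (Suc ` Des K) \<longleftrightarrow> Des J \<subseteq> Des K"
    using zJ by auto
  show "Lq q (phi J) (1 # K) = Lq q J K"
  proof -
    have st: "stS (insert 1 (Suc ` Des K)) (Suc ` Des J) = stS (Des K) (Des J)"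
      using stS_ins_Suc[OF zJ] by simp
    show ?thesis unfolding Lq_alt Des_one[OF Kne] Des_phi[OF Jne] st using sub2 by simp
  qed
qed

lemma phi_sum:
  fixes q :: "'a::field"
  assumes n: "1 \<le> n" and c: "Sol q n c" and K: "K \<in> comps n"
  shows "(\<Sum>J\<in>comps n. ext q n c (phi J) * Lq q J K) = qint q (length K) * S1n q n K"
proof -
  have "(\<Sum>J\<in>comps n. ext q n c (phi J) * Lq q J K)
      = (\<Sum>J\<in>comps n. qint q (length J) * c J * Lq q J K + Mc q c J * Lq q J K)"
    by (rule sum.cong[OF refl]) (simp add: ext_phi[OF n] algebra_simps)
  also have "\<dots> = (\<Sum>J\<in>comps n. qint q (length J) * c J * Lq q J K) + (\<Sum>J\<in>comps n. Mc q c J * Lq q J K)"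
    by (rule sum.distrib)
  also have "(\<Sum>J\<in>comps n. Mc q c J * Lq q J K)
      = (\<Sum>J\<in>comps n. ((qint q (length K) - qint q (length J)) * c J) * Lq q J K)"
    by (rule star[OF n K])
  also have "(\<Sum>J\<in>comps n. qint q (length J) * c J * Lq q J K) +
      (\<Sum>J\<in>comps n. ((qint q (length K) - qint q (length J)) * c J) * Lq q J K)
      = (\<Sum>J\<in>comps n. qint q (length K) * (c J * Lq q J K))"
    by (simp add: sum.distrib[symmetric] algebra_simps)
  also have "\<dots> = qint q (length K) * S1n q n K"
    using c K by (simp add: Sol_def sum_distrib_left)
  finally show ?thesis .
qed

lemma qint_Suc: "qint q (Suc m) = qint q m + q ^ m"
  by (simp add: qint_def)

lemma Sol_step:
  fixes q :: "'a::field"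
  assumes q: "q \<noteq> 0" and n: "1 \<le> n" and c: "Sol q n c"
  shows "Sol q (Suc n) (ext q n c)"
  unfolding Sol_def
proof (intro conjI allI impI ballI)
  fix J assume "J \<notin> comps (Suc n)"
  then show "ext q n c J = 0" by (simp add: ext_def)
next
  fix K' assume K': "K' \<in> comps (Suc n)"
  have ST: "\<And>K. K \<in> comps n \<Longrightarrow> S1n q n K = T q n (Des K)"
    using S1n_T[OF q] by (auto simp: comps_mem)
  have ST': "S1n q (Suc n) K' = T q (Suc n) (Des K')"
  proof -
    have "composition K'" "sum_list K' = Suc n" using K' by (auto simp: comps_mem)
    then show ?thesis using S1n_T[OF q, of K'] by simp
  qed
  have split: "(\<Sum>J'\<in>comps (Suc n). ext q n c J' * Lq q J' K')
      = (\<Sum>J\<in>comps n. c J * Lq q (1 # J) K') + (\<Sum>J\<in>comps n. ext q n c (phi J) * Lq q (phi J) K')"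
    using sum_comps_Suc[OF n, of "\<lambda>J'. ext q n c J' * Lq q J' K'"] by (simp add: ext_one')
  from K' consider K where "K \<in> comps n" "K' = 1 # K" | K where "K \<in> comps n" "K' = phi K"
    using comps_Suc[OF n] by auto
  then show "S1n q (Suc n) K' = (\<Sum>J'\<in>comps (Suc n). ext q n c J' * Lq q J' K')"
  proof cases
    case 1
    note K = 1(1)
    have Kne: "K \<noteq> []" using comps_ne[OF K n] .
    have cK: "composition K" using K by (simp add: comps_mem)
    have lK: "length K = card (Des K) + 1" using card_Des[OF cK] Kne by simp
    have "(\<Sum>J'\<in>comps (Suc n). ext q n c J' * Lq q J' K')
        = (\<Sum>J\<in>comps n. q ^ length K * (c J * Lq q J K)) + (\<Sum>J\<in>comps n. ext q n c (phi J) * Lq q J K)"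
    proof -
      have a: "(\<Sum>J\<in>comps n. c J * Lq q (1 # J) K') = (\<Sum>J\<in>comps n. q ^ length K * (c J * Lq q J K))"
        unfolding 1(2) by (rule sum.cong[OF refl]) (simp add: Lq_cases(3)[OF n _ K, simplified])
      have b: "(\<Sum>J\<in>comps n. ext q n c (phi J) * Lq q (phi J) K') = (\<Sum>J\<in>comps n. ext q n c (phi J) * Lq q J K)"
        unfolding 1(2) by (rule sum.cong[OF refl]) (simp add: Lq_cases[OF n _ K, simplified])
      show ?thesis using split a b by simp
    qed
    also have "\<dots> = q ^ length K * S1n q n K + qint q (length K) * S1n q n K"
      using c K by (simp add: Sol_def sum_distrib_left phi_sum[OF n c K])
    also have "\<dots> = qint q (card (Des K) + 2) * T q n (Des K)"
      using lK ST[OF K] by (simp add: qint_Suc algebra_simps)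
    also have "\<dots> = T q (Suc n) (insert 1 (Suc ` Des K))"
      by (rule T_rec2[OF n zero_notin_Des[OF cK], symmetric])
    also have "\<dots> = S1n q (Suc n) K'"
      using ST' 1(2) by (simp add: Des_one[OF Kne, simplified])
    finally show ?thesis by simp
  next
    case 2
    note K = 2(1)
    have Kne: "K \<noteq> []" using comps_ne[OF K n] .
    have cK: "composition K" using K by (simp add: comps_mem)
    have lK: "length K = card (Des K) + 1" using card_Des[OF cK] Kne by simp
    have "(\<Sum>J'\<in>comps (Suc n). ext q n c J' * Lq q J' K')
        = (\<Sum>J\<in>comps n. ext q n c (phi J) * Lq q J K)"
    proof -
      have a: "(\<Sum>J\<in>comps n. c J * Lq q (1 # J) K') = 0"
        unfolding 2(2) by (rule sum.neutral) (simp add: Lq_cases[OF n _ K, simplified])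
      have b: "(\<Sum>J\<in>comps n. ext q n c (phi J) * Lq q (phi J) K') = (\<Sum>J\<in>comps n. ext q n c (phi J) * Lq q J K)"
        unfolding 2(2) by (rule sum.cong[OF refl]) (simp add: Lq_cases[OF n _ K, simplified])
      show ?thesis using split a b by simp
    qed
    also have "\<dots> = qint q (length K) * S1n q n K" by (rule phi_sum[OF n c K])
    also have "\<dots> = qint q (card (Des K) + 1) * T q n (Des K)"
      using lK ST[OF K] by simp
    also have "\<dots> = T q (Suc n) (Suc ` Des K)"
      by (rule T_rec1[OF n zero_notin_Des[OF cK], symmetric])
    also have "\<dots> = S1n q (Suc n) K'"
      using ST' 2(2) by (simp add: Des_phi[OF Kne])
    finally show ?thesis by simp
  qed
qed




lemma Sol_exists:
  fixes q :: "'a::field"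
  assumes q: "q \<noteq> 0"
  shows "1 \<le> n \<Longrightarrow> \<exists>c. Sol q n c"
proof (induction n rule: nat_induct_at_least)
  case base then show ?case using Sol_base[OF q] by blast
next
  case (Suc n)
  then obtain c where "Sol q n c" by blast
  then show ?case using Sol_step[OF q Suc.hyps] by blast
qed

lemma En_Sol:
  fixes q :: "'a::field"
  assumes q: "q \<noteq> 0" and n: "1 \<le> n"
  shows "Sol q n (\<lambda>J. if J \<in> comps n then ecoef q J else 0)"
proof -
  obtain c where c: "Sol q n c" using Sol_exists[OF q n] by blast
  have "(\<lambda>J. if J \<in> comps n then ecoef q J else 0) = c"
  proof
    fix J show "(if J \<in> comps n then ecoef q J else 0) = c J"
      using ecoef_Sol[OF q n c, of J] c by (auto simp: Sol_def)
  qed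
  then show ?thesis using c by simp
qed

lemma e_rels:
  fixes q :: "'a::field"
  assumes q: "q \<noteq> 0" and I: "composition I" "I \<noteq> []"
  shows "ecoef q (phi I) = qint q (length I) * ecoef q I + Mc q (ecoef q) I"
    and "ecoef q (1 # I) = ecoef q I"
proof -
  define n where "n = sum_list I"
  have n: "1 \<le> n" using composition_sum_pos[OF I] by (simp add: n_def)
  have In: "I \<in> comps n" using I by (simp add: comps_mem n_def)
  define En where "En = (\<lambda>J. if J \<in> comps n then ecoef q J else 0)"
  have S: "Sol q (Suc n) (ext q n En)" using Sol_step[OF q n En_Sol[OF q n]] by (simp add: En_def)
  have "ecoef q (phi I) = ext q n En (phi I)"
    by (rule ecoef_Sol[OF q _ S phi_comps[OF In n]]) simp
  also have "\<dots> = qint q (length I) * En I + Mc q En I" by (rule ext_phi[OF n In])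
  also have "Mc q En I = Mc q (ecoef q) I"
    unfolding Mc_def
  proof (rule sum.cong[OF refl])
    fix k assume k: "k \<in> {1..<length I}"
    have "composition (mergeAt I k) \<and> sum_list (mergeAt I k) = sum_list I"
      using mergeAt_props[OF I(1)] k by auto
    then have "mergeAt I k \<in> comps n" by (simp add: comps_mem n_def)
    then show "q ^ (k - 1) * En (mergeAt I k) = q ^ (k - 1) * ecoef q (mergeAt I k)" by (simp add: En_def)
  qed
  finally show "ecoef q (phi I) = qint q (length I) * ecoef q I + Mc q (ecoef q) I"
    using In by (simp add: En_def)
  have "ecoef q (1 # I) = ext q n En (1 # I)"
    by (rule ecoef_Sol[OF q _ S one_comps[OF In]]) simp
  also have "\<dots> = En I" by (rule ext_one[OF In])
  also have "\<dots> = ecoef q I" using In by (simp add: En_def)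
  finally show "ecoef q (1 # I) = ecoef q I" .
qed

lemma qX_nonzero: "(qX :: 'k::field_char_0 poly fract) \<noteq> 0"
  by (simp add: qX_def Zero_fract_def eq_fract)

theorem mainTheorem12:
  shows "(\<forall>I. composition I \<and> I \<noteq> [] \<longrightarrow>
            (e ((1 + hd I) # tl I) :: 'k::field_char_0 poly fract)
              = qint qX (length I) * e I
                + (\<Sum>k\<in>{1..<length I}. qX ^ (k - 1) * e (mergeAt I k)))
       \<and> (\<forall>I. composition I \<and> I \<noteq> [] \<longrightarrow> (e (1 # I) :: 'k poly fract) = e I)
       \<and> (\<forall>f :: nat list \<Rightarrow> 'k poly fract.
            f [1] = 1
            \<and> (\<forall>I. composition I \<and> I \<noteq> [] \<longrightarrow>
                 f ((1 + hd I) # tl I) = qint qX (length I) * f I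
                   + (\<Sum>k\<in>{1..<length I}. qX ^ (k - 1) * f (mergeAt I k)))
            \<and> (\<forall>I. composition I \<and> I \<noteq> [] \<longrightarrow> f (1 # I) = f I)
            \<longrightarrow> (\<forall>I. composition I \<and> I \<noteq> [] \<longrightarrow> f I = e I))"
proof (intro conjI allI impI)
  have q: "(qX :: 'k poly fract) \<noteq> 0" by (rule qX_nonzero)
  have P1: "\<And>I. composition I \<Longrightarrow> I \<noteq> [] \<Longrightarrow> (e ((1 + hd I) # tl I) :: 'k poly fract)
      = qint qX (length I) * e I + (\<Sum>k\<in>{1..<length I}. qX ^ (k - 1) * e (mergeAt I k))"
    using e_rels(1)[OF q] by (simp add: phi_def Mc_def)
  have P2: "\<And>I. composition I \<Longrightarrow> I \<noteq> [] \<Longrightarrow> (e (1 # I) :: 'k poly fract) = e I"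
    using e_rels(2)[OF q] by simp
  fix I :: "nat list"
  {
    assume "composition I \<and> I \<noteq> []"
    then show "(e ((1 + hd I) # tl I) :: 'k poly fract)
      = qint qX (length I) * e I + (\<Sum>k\<in>{1..<length I}. qX ^ (k - 1) * e (mergeAt I k))"
      using P1 by blast
  next
    assume "composition I \<and> I \<noteq> []"
    then show "(e (1 # I) :: 'k poly fract) = e I" using P2 by blast
  }
next
  fix f :: "nat list \<Rightarrow> 'k poly fract" and I :: "nat list"
  assume f: "f [1] = 1 \<and>
     (\<forall>I. composition I \<and> I \<noteq> [] \<longrightarrow>
        f ((1 + hd I) # tl I) = qint qX (length I) * f I + (\<Sum>k\<in>{1..<length I}. qX ^ (k - 1) * f (mergeAt I k))) \<and>
     (\<forall>I. composition I \<and> I \<noteq> [] \<longrightarrow> f (1 # I) = f I)"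
  assume I: "composition I \<and> I \<noteq> []"
  have q: "(qX :: 'k poly fract) \<noteq> 0" by (rule qX_nonzero)
  have main: "1 \<le> n \<Longrightarrow> \<forall>J\<in>comps n. f J = e J" for n
  proof (induction n rule: nat_induct_at_least)
    case base
    have "e [1] = (1 :: 'k poly fract)"
      using ecoef_Sol[OF q _ Sol_base[OF q], of "[1]"] comps_one by simp
    then show ?case using f by (simp add: comps_one[simplified])
  next
    case (Suc n)
    show ?case
    proof
      fix J' assume J': "J' \<in> comps (Suc n)"
      from J' consider J where "J \<in> comps n" "J' = 1 # J" | J where "J \<in> comps n" "J' = phi J"
        using comps_Suc[OF Suc.hyps] by auto
      then show "f J' = e J'"
      proof cases
        case 1
        have cJ: "composition J" "J \<noteq> []" using 1(1) comps_ne[OF 1(1) Suc.hyps] by (auto simp: comps_mem)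
        have "f J' = f J" using f cJ 1(2) by simp
        also have "\<dots> = e J" using Suc.IH 1(1) by simp
        also have "\<dots> = e J'" using e_rels(2)[OF q cJ] 1(2) by simp
        finally show ?thesis .
      next
        case 2
        have cJ: "composition J" "J \<noteq> []" using 2(1) comps_ne[OF 2(1) Suc.hyps] by (auto simp: comps_mem)
        have mk: "\<And>k. k \<in> {1..<length J} \<Longrightarrow> mergeAt J k \<in> comps n"
          using mergeAt_props[OF cJ(1)] 2(1) by (auto simp: comps_mem)
        have "f J' = f ((1 + hd J) # tl J)" using 2(2) by (simp add: phi_def)
        also have "\<dots> = qint qX (length J) * f J + (\<Sum>k\<in>{1..<length J}. qX ^ (k - 1) * f (mergeAt J k))"
          using f cJ by blast
        also have "\<dots> = qint qX (length J) * e J + (\<Sum>k\<in>{1..<length J}. qX ^ (k - 1) * e (mergeAt J k))"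
        proof -
          have "(\<Sum>k\<in>{1..<length J}. qX ^ (k - 1) * f (mergeAt J k)) = (\<Sum>k\<in>{1..<length J}. qX ^ (k - 1) * e (mergeAt J k))"
            by (rule sum.cong[OF refl]) (use Suc.IH mk in auto)
          then show ?thesis using Suc.IH 2(1) by simp
        qed
        also have "\<dots> = e J'"
          using e_rels(1)[OF q cJ] 2(2) by (simp add: Mc_def)
        finally show ?thesis .
      qed
    qed
  qed
  have "1 \<le> sum_list I" using composition_sum_pos[of I] I by simp
  then show "f I = e I" using main[of "sum_list I"] I by (simp add: comps_mem)
qed


end
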